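(* Let $a_1,a_2,b_1,b_2,\gamma>0$ and define $F_1(r)=\frac1{a_1}r^{a_1}$, $F_2(r)=\frac1{a_2}r^{a_2}$ for $r\ge0$, and $h(\mathbf r)=\dfrac{r_1^{b_1}r_2^{b_2}}{(1+r_1+r_2)^\gamma}$ for $\mathbf r\in[0,\infty)^2$. Then $F_1,F_2,h$ satisfy all the conditions (F), (h), ($\theta$) listed in the context if and only if, for $j=1,2$, \[a_j\ge2,\qquad b_j\ge2a_j-1,\qquad b_1+b_2\le\gamma+\min\{a_1,a_2\}.\]
   Context: Conditions. (F): for $j=1,2$, $F_j:[0,\infty)\to[0,\infty)$ is $C^2$ with $F_j''(r)>0$ for $r>0$, $F_j(0)=F_j'(0)=0$, $\liminf_{r\to\infty}F_j''(r)>0$, $\limsup_{r\to\infty}F_j'(r)/F_j(r)<\infty$; there are $m_j,M_j>0$, $\beta_j\ge0$, $r_0>0$ with $m_jr^{\beta_j}\le F_j''(r)\le M_jr^{\beta_j}$ for $0\le r\le r_0$; and $F_j(r)-rF_j'(r)+r^2F_j''(r)\ge0$ for all $r\ge0$. (h): $h:[0,\infty)^2\to\mathbb R$ is $C^2$ with $h(r_1,0)=h(0,r_2)=0$ and $\partial_{r_j}h(r_1,0)=\partial_{r_j}h(0,r_2)=0$ for $j=1,2$ and all $r_1,r_2\ge0$. ($\theta$): with $\theta_j(\mathbf u):=\partial_{r_j}h((F_1')^{-1}(u_1),(F_2')^{-1}(u_2))$ and $\theta_{j,i}:=\partial_{u_i}\theta_j$ (i.e. $\theta_{j,i}(\mathbf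 u)=\partial_{r_i}\partial_{r_j}h(\mathbf r)/F_i''(r_i)$, $r_k=(F_k')^{-1}(u_k)$), each $\theta_{j,i}$ is locally Lipschitz on $[0,\infty)^2$ and there are constants $\kappa_{j,i}>0$ with $|\partial_{r_i}\partial_{r_j}h(\mathbf r)|\le\kappa_{j,i}F_i''(r_i)\min\{1,F_1'(r_1),F_2'(r_2),\sqrt{r_i/r_j}\}$ for all $\mathbf r\in[0,\infty)^2$ and $i,j\in\{1,2\}$. *)

theory Defs
  imports "HOL-Analysis.Analysis" "HOL-Library.Liminf_Limsup"
begin

definition Qd :: "(real \<times> real) set" where
  "Qd = {0..} \<times> {0..}"

definition coord :: "nat \<Rightarrow> real \<times> real \<Rightarrow> real" where
  "coord i p = (if i = 1 then fst p else snd p)"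

definition upd :: "nat \<Rightarrow> real \<Rightarrow> real \<times> real \<Rightarrow> real \<times> real" where
  "upd i t p = (if i = 1 then (t, snd p) else (fst p, t))"

text \<open>Real power with the usual convention 0^0 = 1 (used for r \<ge> 0, exponent \<ge> 0).\<close>
definition rpow :: "real \<Rightarrow> real \<Rightarrow> real" where
  "rpow r b = (if r = 0 then (if b = 0 then 1 else 0) else r powr b)"

definition locally_lipschitz_on :: "(real \<times> real) set \<Rightarrow> (real \<times> real \<Rightarrow> real) \<Rightarrow> bool" where
  "locally_lipschitz_on S f \<longleftrightarrow>
     (\<forall>x\<in>S. \<exists>e>0. \<exists>L. L-lipschitz_on (cball x e \<inter> S) f)"

definition C2_nonneg :: "(real \<Rightarrow> real) \<Rightarrow> (real \<Rightarrow> real) \<Rightarrow> (real \<Rightarrow> real) \<Rightarrow> bool" where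
  "C2_nonneg F F' F'' \<longleftrightarrow>
     (\<forall>r\<ge>0. (F has_real_derivative F' r) (at r within {0..}) \<and>
             (F' has_real_derivative F'' r) (at r within {0..})) \<and>
     continuous_on {0..} F''"

text \<open>Condition (F) for one function, except for the near-zero bound (whose r0 is shared).\<close>
definition cond_F :: "(real \<Rightarrow> real) \<Rightarrow> (real \<Rightarrow> real) \<Rightarrow> (real \<Rightarrow> real) \<Rightarrow> bool" where
  "cond_F F F' F'' \<longleftrightarrow>
     C2_nonneg F F' F'' \<and>
     (\<forall>r\<ge>0. F r \<ge> 0) \<and>
     (\<forall>r>0. F'' r > 0) \<and>
     F 0 = 0 \<and> F' 0 = 0 \<and>
     Liminf at_top (\<lambda>r. ereal (F'' r)) > 0 \<and>
     Limsup at_top (\<lambda>r. ereal (F' r / F r)) < \<infinity> \<and>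
     (\<forall>r\<ge>0. F r - r * F' r + r\<^sup>2 * F'' r \<ge> 0)"

definition near0_F :: "(real \<Rightarrow> real) \<Rightarrow> real \<Rightarrow> bool" where
  "near0_F F'' r0 \<longleftrightarrow>
     (\<exists>m M \<beta>. m > 0 \<and> M > 0 \<and> \<beta> \<ge> 0 \<and>
        (\<forall>r. 0 \<le> r \<and> r \<le> r0 \<longrightarrow> m * rpow r \<beta> \<le> F'' r \<and> F'' r \<le> M * rpow r \<beta>))"

text \<open>h is C^2 on the closed quadrant; Dh j = \<partial>_{r_j} h, D2h j i = \<partial>_{r_i}\<partial>_{r_j} h.\<close>
definition C2_quadrant :: "(real \<times> real \<Rightarrow> real) \<Rightarrow> (nat \<Rightarrow> real \<times> real \<Rightarrow> real)
     \<Rightarrow> (nat \<Rightarrow> nat \<Rightarrow> real \<times> real \<Rightarrow> real) \<Rightarrow> bool" where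
  "C2_quadrant h Dh D2h \<longleftrightarrow>
     (\<forall>p\<in>Qd. (h has_derivative (\<lambda>v. fst v * Dh 1 p + snd v * Dh 2 p)) (at p within Qd) \<and>
        (\<forall>j\<in>{1,2}. (Dh j has_derivative (\<lambda>v. fst v * D2h j 1 p + snd v * D2h j 2 p)) (at p within Qd))) \<and>
     (\<forall>j\<in>{1,2}. \<forall>i\<in>{1,2}. continuous_on Qd (D2h j i))"

definition cond_h :: "(real \<times> real \<Rightarrow> real) \<Rightarrow> (nat \<Rightarrow> real \<times> real \<Rightarrow> real)
     \<Rightarrow> (nat \<Rightarrow> nat \<Rightarrow> real \<times> real \<Rightarrow> real) \<Rightarrow> bool" where
  "cond_h h Dh D2h \<longleftrightarrow>
     C2_quadrant h Dh D2h \<and>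
     (\<forall>r1\<ge>0. h (r1, 0) = 0) \<and> (\<forall>r2\<ge>0. h (0, r2) = 0) \<and>
     (\<forall>j\<in>{1,2}. (\<forall>r1\<ge>0. Dh j (r1, 0) = 0) \<and> (\<forall>r2\<ge>0. Dh j (0, r2) = 0))"

definition theta :: "(real \<Rightarrow> real) \<Rightarrow> (real \<Rightarrow> real) \<Rightarrow> (nat \<Rightarrow> real \<times> real \<Rightarrow> real)
     \<Rightarrow> nat \<Rightarrow> real \<times> real \<Rightarrow> real" where
  "theta F1' F2' Dh j u = Dh j (inv_into {0..} F1' (fst u), inv_into {0..} F2' (snd u))"

definition cond_theta :: "(real \<Rightarrow> real) \<Rightarrow> (real \<Rightarrow> real) \<Rightarrow> (real \<Rightarrow> real) \<Rightarrow> (real \<Rightarrow> real)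
     \<Rightarrow> (nat \<Rightarrow> real \<times> real \<Rightarrow> real) \<Rightarrow> (nat \<Rightarrow> nat \<Rightarrow> real \<times> real \<Rightarrow> real) \<Rightarrow> bool" where
  "cond_theta F1' F1'' F2' F2'' Dh D2h \<longleftrightarrow>
     (\<forall>j\<in>{1::nat,2}. \<forall>i\<in>{1::nat,2}.
        (\<exists>\<theta>ji. (\<forall>u\<in>Qd. ((\<lambda>t. theta F1' F2' Dh j (upd i t u)) has_real_derivative \<theta>ji u)
                          (at (coord i u) within {0..})) \<and>
               locally_lipschitz_on Qd \<theta>ji) \<and>
        (\<exists>\<kappa>>0. \<forall>r\<in>Qd. \<bar>D2h j i r\<bar> \<le>
            \<kappa> * (if i = 1 then F1'' else F2'') (coord i r) *
            min 1 (min (F1' (fst r)) (min (F2' (snd r)) (sqrt (coord i r / coord j r))))))"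

definition all_conditions :: "(real \<Rightarrow> real) \<Rightarrow> (real \<Rightarrow> real) \<Rightarrow> (real \<times> real \<Rightarrow> real) \<Rightarrow> bool" where
  "all_conditions F1 F2 h \<longleftrightarrow>
     (\<exists>F1' F1'' F2' F2'' Dh D2h.
        cond_F F1 F1' F1'' \<and> cond_F F2 F2' F2'' \<and>
        (\<exists>r0>0. near0_F F1'' r0 \<and> near0_F F2'' r0) \<and>
        cond_h h Dh D2h \<and>
        cond_theta F1' F1'' F2' F2'' Dh D2h)"

end

theory Submission
  imports Defs
begin


lemma deriv0_bound:
  fixes f :: "real \<Rightarrow> real"
  assumes f0: "f 0 = 0" and d: "d > 0" and e: "e > 1"
    and bd: "\<And>t. 0 < t \<Longrightarrow> t < d \<Longrightarrow> \<bar>f t\<bar> \<le> C * t powr e"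
  shows "(f has_real_derivative 0) (at 0 within {0..})"
proof -
  have ev: "eventually (\<lambda>y. norm ((f y - f 0) / (y - 0)) \<le> C * y powr (e - 1)) (at 0 within {0..})"
  proof -
    have "eventually (\<lambda>y::real. y \<in> {0..} \<and> y \<noteq> 0 \<and> dist y 0 < d) (at 0 within {0..})"
      using d by (auto simp: eventually_at)
    then show ?thesis
    proof (rule eventually_mono)
      fix y :: real assume y: "y \<in> {0..} \<and> y \<noteq> 0 \<and> dist y 0 < d"
      then have yp: "y > 0" "y < d" by auto
      have "\<bar>f y\<bar> / y \<le> C * y powr e / y" using bd[OF yp] yp by (simp add: divide_right_mono)
      also have "C * y powr e / y = C * y powr (e - 1)" using yp by (simp add: powr_diff)
      finally show "norm ((f y - f 0) / (y - 0)) \<le> C * y powr (e - 1)"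
        using f0 yp by (simp add: abs_divide)
    qed
  qed
  have "((\<lambda>y. C * y powr (e - 1)) \<longlongrightarrow> C * 0 powr (e - 1)) (at 0 within {0..})"
    using e by (intro tendsto_intros) (auto simp: eventually_at_filter)
  then have lim: "((\<lambda>y. C * y powr (e - 1)) \<longlongrightarrow> 0) (at 0 within {0..})" by simp
  show ?thesis unfolding has_field_derivative_iff
    by (rule Lim_null_comparison[OF ev lim])
qed

lemma pw_deriv:
  fixes b x :: real
  assumes b: "b > 1" and x: "x \<ge> 0"
  shows "((\<lambda>x. x powr b) has_real_derivative b * x powr (b - 1)) (at x within {0..})"
proof (cases "x = 0")
  case True
  have "((\<lambda>x. x powr b) has_real_derivative 0) (at 0 within {0..})"
    by (rule deriv0_bound[where d=1 and e=b and C=1]) (use b in auto)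
  then show ?thesis using True b by simp
next
  case False
  then have xp: "x > 0" using x by simp
  have "((\<lambda>x. x powr b) has_real_derivative b * x powr (b - 1)) (at x)"
    using xp by (auto intro!: derivative_eq_intros)
  then show ?thesis by (rule has_field_derivative_at_within)
qed



definition T :: "real \<Rightarrow> real \<Rightarrow> real \<Rightarrow> real \<Rightarrow> real \<times> real \<Rightarrow> real" where
  "T g k1 k2 m p = fst p powr k1 * snd p powr k2 * (1 + fst p + snd p) powr (-(g+m))"

lemma fst_pw_deriv:
  assumes k: "k > 1" and p: "p \<in> Qd"
  shows "((\<lambda>p. fst p powr k) has_derivative (\<lambda>v. fst v * (k * fst p powr (k-1)))) (at p within Qd)"
proof -
  have "((\<lambda>x. x powr k) has_derivative (\<lambda>x. (k * fst p powr (k-1)) * x)) (at (fst p) within {0..})"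
    using pw_deriv[OF k, of "fst p"] p unfolding has_field_derivative_def by (auto simp: Qd_def)
  then have "((\<lambda>x. x powr k) has_derivative (\<lambda>x. (k * fst p powr (k-1)) * x)) (at (fst p) within fst ` Qd)"
    by (rule has_derivative_subset) (auto simp: Qd_def)
  from has_derivative_in_compose[OF has_derivative_fst[OF has_derivative_ident] this]
  show ?thesis by (simp add: mult.commute)
qed

lemma snd_pw_deriv:
  assumes k: "k > 1" and p: "p \<in> Qd"
  shows "((\<lambda>p. snd p powr k) has_derivative (\<lambda>v. snd v * (k * snd p powr (k-1)))) (at p within Qd)"
proof -
  have "((\<lambda>x. x powr k) has_derivative (\<lambda>x. (k * snd p powr (k-1)) * x)) (at (snd p) within {0..})"
    using pw_deriv[OF k, of "snd p"] p unfolding has_field_derivative_def by (auto simp: Qd_def)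
  then have "((\<lambda>x. x powr k) has_derivative (\<lambda>x. (k * snd p powr (k-1)) * x)) (at (snd p) within snd ` Qd)"
    by (rule has_derivative_subset) (auto simp: Qd_def)
  from has_derivative_in_compose[OF has_derivative_snd[OF has_derivative_ident] this]
  show ?thesis by (simp add: mult.commute)
qed

lemma W_deriv:
  assumes p: "p \<in> Qd"
  shows "((\<lambda>p. (1 + fst p + snd p) powr (-(g+m))) has_derivative
     (\<lambda>v. (fst v + snd v) * (-(g+m) * (1 + fst p + snd p) powr (-(g+(m+1)))))) (at p within Qd)"
proof -
  have pos: "1 + fst p + snd p > 0" using p by (auto simp: Qd_def)
  have e: "(1 + fst p + snd p) powr (-(g+(m+1))) = (1 + fst p + snd p) powr (-(g+m)) / (1 + fst p + snd p)"
  proof -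
    have "(1 + fst p + snd p) powr (-(g+(m+1))) = (1 + fst p + snd p) powr (-(g+m) - 1)"
      by (intro arg_cong[where f="(powr) (1 + fst p + snd p)"]) simp
    also have "\<dots> = (1 + fst p + snd p) powr (-(g+m)) / (1 + fst p + snd p) powr 1"
      by (rule powr_diff)
    finally show ?thesis using pos by simp
  qed
  show ?thesis
    apply (rule has_derivative_eq_rhs)
     apply (rule has_derivative_powr)
        apply (rule derivative_intros | simp)+
    using pos p
      apply simp
    using p apply simp
    apply (rule ext)
    unfolding e using pos by (simp add: field_simps)
qed



lemma T_deriv:
  assumes k1: "k1 > 1" and k2: "k2 > 1" and p: "p \<in> Qd"
  shows "(T g k1 k2 m has_derivative (\<lambda>v. fst v * (k1 * T g (k1-1) k2 m p - (g+m) * T g k1 k2 (m+1) p)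
      + snd v * (k2 * T g k1 (k2-1) m p - (g+m) * T g k1 k2 (m+1) p))) (at p within Qd)"
proof -
  have eq: "T g k1 k2 m = (\<lambda>p. fst p powr k1 * snd p powr k2 * (1 + fst p + snd p) powr (-(g+m)))"
    by (rule ext) (simp add: T_def)
  show ?thesis
    unfolding eq
    apply (rule has_derivative_eq_rhs)
     apply (rule has_derivative_mult)
      apply (rule has_derivative_mult)
       apply (rule fst_pw_deriv[OF k1 p])
      apply (rule snd_pw_deriv[OF k2 p])
     apply (rule W_deriv[OF p])
    apply (rule ext)
    apply (simp add: T_def algebra_simps)
    done
qed

fun Tsum :: "real \<Rightarrow> (real \<times> real \<times> real \<times> real) list \<Rightarrow> real \<times> real \<Rightarrow> real" where
  "Tsum g [] p = 0"
| "Tsum g ((c,k1,k2,m)#ts) p = c * T g k1 k2 m p + Tsum g ts p"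

fun d1 :: "real \<Rightarrow> (real \<times> real \<times> real \<times> real) list \<Rightarrow> (real \<times> real \<times> real \<times> real) list" where
  "d1 g [] = []"
| "d1 g ((c,k1,k2,m)#ts) = (c*k1, k1-1, k2, m) # (-(c*(g+m)), k1, k2, m+1) # d1 g ts"

fun d2 :: "real \<Rightarrow> (real \<times> real \<times> real \<times> real) list \<Rightarrow> (real \<times> real \<times> real \<times> real) list" where
  "d2 g [] = []"
| "d2 g ((c,k1,k2,m)#ts) = (c*k2, k1, k2-1, m) # (-(c*(g+m)), k1, k2, m+1) # d2 g ts"

lemma Tsum_deriv:
  assumes "\<forall>(c,k1,k2,m)\<in>set ts. k1 > 1 \<and> k2 > 1" and p: "p \<in> Qd"
  shows "(Tsum g ts has_derivative (\<lambda>v. fst v * Tsum g (d1 g ts) p + snd v * Tsum g (d2 g ts) p)) (at p within Qd)"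
  using assms(1)
proof (induction ts)
  case Nil
  have eq: "Tsum g [] = (\<lambda>p. 0)" by (rule ext) simp
  show ?case unfolding eq
    by (rule has_derivative_eq_rhs[OF has_derivative_const]) (simp add: fun_eq_iff)
next
  case (Cons a ts)
  obtain c k1 k2 m where a: "a = (c,k1,k2,m)" by (cases a) auto
  have k: "k1 > 1" "k2 > 1" using Cons.prems a by auto
  have ih: "(Tsum g ts has_derivative (\<lambda>v. fst v * Tsum g (d1 g ts) p + snd v * Tsum g (d2 g ts) p)) (at p within Qd)"
    using Cons by auto
  have eq: "Tsum g (a#ts) = (\<lambda>p. c * T g k1 k2 m p + Tsum g ts p)"
    by (rule ext) (simp add: a)
  show ?case
    unfolding eq
    apply (rule has_derivative_eq_rhs)
     apply (rule has_derivative_add)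
      apply (rule has_derivative_mult_right)
      apply (rule T_deriv[OF k p])
     apply (rule ih)
    apply (rule ext)
    apply (simp add: a algebra_simps)
    done
qed



lemma T_nonneg: "p \<in> Qd \<Longrightarrow> T g k1 k2 m p \<ge> 0"
  by (simp add: T_def Qd_def)

lemma T_zero1: "T g k1 k2 m (0, y) = 0"
  by (simp add: T_def)
lemma T_zero2: "T g k1 k2 m (x, 0) = 0"
  by (simp add: T_def)
lemma Tsum_zero1: "Tsum g ts (0, y) = 0"
proof (induction ts)
  case (Cons a ts) then show ?case by (cases a) (simp add: T_zero1)
qed simp
lemma Tsum_zero2: "Tsum g ts (x, 0) = 0"
proof (induction ts)
  case (Cons a ts) then show ?case by (cases a) (simp add: T_zero2)
qed simp

lemma T_cont:
  assumes "k1 > 0" "k2 > 0"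
  shows "continuous_on Qd (T g k1 k2 m)"
proof -
  have eq: "T g k1 k2 m = (\<lambda>p. fst p powr k1 * snd p powr k2 * (1 + fst p + snd p) powr (-(g+m)))"
    by (rule ext) (simp add: T_def)
  show ?thesis unfolding eq
    by (intro continuous_intros continuous_on_powr') (use assms in \<open>auto simp: Qd_def\<close>)
qed

lemma Tsum_cont:
  assumes "\<forall>(c,k1,k2,m)\<in>set ts. k1 > 0 \<and> k2 > 0"
  shows "continuous_on Qd (Tsum g ts)"
  using assms
proof (induction ts)
  case Nil
  have eq: "Tsum g [] = (\<lambda>p. 0)" by (rule ext) simp
  show ?case unfolding eq by (rule continuous_on_const)
next
  case (Cons a ts)
  obtain c k1 k2 m where a: "a = (c,k1,k2,m)" by (cases a) auto
  have eq: "Tsum g (a#ts) = (\<lambda>p. c * T g k1 k2 m p + Tsum g ts p)"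
    by (rule ext) (simp add: a)
  show ?case unfolding eq
    using Cons a by (intro continuous_intros T_cont) auto
qed

lemma T_bound:
  assumes x: "x > 0" and y: "y > 0" and "e1 \<le> k1" "e2 \<le> k2" "k1 - e1 + (k2 - e2) \<le> g + m"
  shows "T g k1 k2 m (x, y) \<le> x powr e1 * y powr e2"
proof -
  define S where "S = 1 + x + y"
  have S: "S \<ge> 1" "x \<le> S" "y \<le> S" "S > 0" using x y by (auto simp: S_def)
  have 1: "x powr k1 \<le> x powr e1 * S powr (k1 - e1)"
  proof -
    have "x powr k1 = x powr e1 * x powr (k1 - e1)" by (simp add: powr_add[symmetric])
    also have "\<dots> \<le> x powr e1 * S powr (k1 - e1)"
      using assms S by (intro mult_left_mono powr_mono2) auto
    finally show ?thesis .
  qed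
  have 2: "y powr k2 \<le> y powr e2 * S powr (k2 - e2)"
  proof -
    have "y powr k2 = y powr e2 * y powr (k2 - e2)" by (simp add: powr_add[symmetric])
    also have "\<dots> \<le> y powr e2 * S powr (k2 - e2)"
      using assms S by (intro mult_left_mono powr_mono2) auto
    finally show ?thesis .
  qed
  have "T g k1 k2 m (x, y) = x powr k1 * y powr k2 * S powr (-(g+m))"
    by (simp add: T_def S_def)
  also have "\<dots> \<le> (x powr e1 * S powr (k1 - e1)) * (y powr e2 * S powr (k2 - e2)) * S powr (-(g+m))"
    using 1 2 by (intro mult_right_mono mult_mono) auto
  also have "\<dots> = x powr e1 * y powr e2 * S powr ((k1 - e1) + (k2 - e2) + (-(g+m)))"
    by (simp add: powr_add)
  also have "\<dots> \<le> x powr e1 * y powr e2 * S powr 0"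
    using assms S by (intro mult_left_mono powr_mono) auto
  finally show ?thesis using S by simp
qed

definition sabs :: "(real \<times> real \<times> real \<times> real) list \<Rightarrow> real" where
  "sabs ts = sum_list (map (\<lambda>(c,k1,k2,m). \<bar>c\<bar>) ts)"

lemma sabs_simps[simp]: "sabs [] = 0" "sabs ((c,k1,k2,m)#ts) = \<bar>c\<bar> + sabs ts"
  by (auto simp: sabs_def)

lemma Tsum_bound:
  assumes x: "x > 0" and y: "y > 0"
    and "\<forall>(c,k1,k2,m)\<in>set ts. e1 \<le> k1 \<and> e2 \<le> k2 \<and> k1 - e1 + (k2 - e2) \<le> g + m"
  shows "\<bar>Tsum g ts (x, y)\<bar> \<le> sabs ts * (x powr e1 * y powr e2)"
  using assms(3)
proof (induction ts)
  case Nil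
  then show ?case by simp
next
  case (Cons a ts)
  obtain c k1 k2 m where a: "a = (c,k1,k2,m)" by (cases a) auto
  have t: "T g k1 k2 m (x, y) \<le> x powr e1 * y powr e2"
    using Cons.prems a by (intro T_bound x y) auto
  have t0: "T g k1 k2 m (x, y) \<ge> 0" using x y by (intro T_nonneg) (auto simp: Qd_def)
  have "\<bar>c * T g k1 k2 m (x, y)\<bar> \<le> \<bar>c\<bar> * (x powr e1 * y powr e2)"
    using t t0 by (simp add: abs_mult mult_left_mono)
  moreover have "\<bar>Tsum g ts (x, y)\<bar> \<le> sabs ts * (x powr e1 * y powr e2)" using Cons by auto
  ultimately show ?case using a by (simp add: algebra_simps)
qed

lemma T_bound0:
  assumes "x \<ge> 0" "y \<ge> 0" "g + m \<ge> 0"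
  shows "T g k1 k2 m (x, y) \<le> x powr k1 * y powr k2"
proof -
  have "(1 + x + y) powr (-(g+m)) \<le> 1"
    using powr_mono[of "-(g+m)" 0 "1+x+y"] assms by simp
  then have "x powr k1 * y powr k2 * (1 + x + y) powr (-(g+m)) \<le> x powr k1 * y powr k2 * 1"
    by (intro mult_left_mono) auto
  then show ?thesis by (simp add: T_def)
qed

definition sabs2 :: "real \<Rightarrow> (real \<times> real \<times> real \<times> real) list \<Rightarrow> real" where
  "sabs2 y ts = sum_list (map (\<lambda>(c,k1,k2,m). \<bar>c\<bar> * y powr k2) ts)"
definition sabs1 :: "real \<Rightarrow> (real \<times> real \<times> real \<times> real) list \<Rightarrow> real" where
  "sabs1 x ts = sum_list (map (\<lambda>(c,k1,k2,m). \<bar>c\<bar> * x powr k1) ts)"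

lemma Tsum_bound01:
  assumes x: "0 \<le> x" "x \<le> 1" and y: "y \<ge> 0"
    and "\<forall>(c,k1,k2,m)\<in>set ts. e \<le> k1 \<and> g + m \<ge> 0"
  shows "\<bar>Tsum g ts (x, y)\<bar> \<le> sabs2 y ts * x powr e"
  using assms(4)
proof (induction ts)
  case Nil
  then show ?case by (simp add: sabs2_def)
next
  case (Cons a ts)
  obtain c k1 k2 m where a: "a = (c,k1,k2,m)" by (cases a) auto
  have t: "T g k1 k2 m (x, y) \<le> x powr k1 * y powr k2"
    using Cons.prems a x y by (intro T_bound0) auto
  also have "\<dots> \<le> x powr e * y powr k2"
    using Cons.prems a x y by (intro mult_right_mono powr_mono') auto
  finally have t: "T g k1 k2 m (x, y) \<le> x powr e * y powr k2" .
  have t0: "T g k1 k2 m (x, y) \<ge> 0" using x y by (intro T_nonneg) (auto simp: Qd_def)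
  have "\<bar>c * T g k1 k2 m (x, y)\<bar> \<le> \<bar>c\<bar> * (x powr e * y powr k2)"
    using t t0 by (simp add: abs_mult mult_left_mono)
  moreover have "\<bar>Tsum g ts (x, y)\<bar> \<le> sabs2 y ts * x powr e" using Cons by auto
  ultimately show ?case using a by (simp add: sabs2_def algebra_simps)
qed

lemma Tsum_bound02:
  assumes y: "0 \<le> y" "y \<le> 1" and x: "x \<ge> 0"
    and "\<forall>(c,k1,k2,m)\<in>set ts. e \<le> k2 \<and> g + m \<ge> 0"
  shows "\<bar>Tsum g ts (x, y)\<bar> \<le> sabs1 x ts * y powr e"
  using assms(4)
proof (induction ts)
  case Nil
  then show ?case by (simp add: sabs1_def)
next
  case (Cons a ts)
  obtain c k1 k2 m where a: "a = (c,k1,k2,m)" by (cases a) auto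
  have t: "T g k1 k2 m (x, y) \<le> x powr k1 * y powr k2"
    using Cons.prems a x y by (intro T_bound0) auto
  also have "\<dots> \<le> x powr k1 * y powr e"
    using Cons.prems a x y by (intro mult_left_mono powr_mono') auto
  finally have t: "T g k1 k2 m (x, y) \<le> x powr k1 * y powr e" .
  have t0: "T g k1 k2 m (x, y) \<ge> 0" using x y by (intro T_nonneg) (auto simp: Qd_def)
  have "\<bar>c * T g k1 k2 m (x, y)\<bar> \<le> \<bar>c\<bar> * (x powr k1 * y powr e)"
    using t t0 by (simp add: abs_mult mult_left_mono)
  moreover have "\<bar>Tsum g ts (x, y)\<bar> \<le> sabs1 x ts * y powr e" using Cons by auto
  ultimately show ?case using a by (simp add: sabs1_def algebra_simps)
qed



lemma partial1:
  assumes f: "(f has_derivative (\<lambda>v. fst v * A + snd v * B)) (at (x,y) within Qd)"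
    and "x \<ge> 0" "y \<ge> 0"
  shows "((\<lambda>t. f (t, y)) has_real_derivative A) (at x within {0..})"
proof -
  have i: "((\<lambda>t. (t, y)) has_derivative (\<lambda>t. (t, 0))) (at x within {0..})"
    by (auto intro!: derivative_eq_intros)
  have "(f has_derivative (\<lambda>v. fst v * A + snd v * B)) (at (x,y) within (\<lambda>t. (t, y)) ` {0..})"
    using f by (rule has_derivative_subset) (use assms in \<open>auto simp: Qd_def\<close>)
  from has_derivative_in_compose[OF i this]
  show ?thesis unfolding has_field_derivative_def
    by (rule has_derivative_eq_rhs) (auto simp: fun_eq_iff)
qed

lemma partial2:
  assumes f: "(f has_derivative (\<lambda>v. fst v * A + snd v * B)) (at (x,y) within Qd)"
    and "x \<ge> 0" "y \<ge> 0"
  shows "((\<lambda>t. f (x, t)) has_real_derivative B) (at y within {0..})"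
proof -
  have i: "((\<lambda>t. (x, t)) has_derivative (\<lambda>t. (0, t))) (at y within {0..})"
    by (auto intro!: derivative_eq_intros)
  have "(f has_derivative (\<lambda>v. fst v * A + snd v * B)) (at (x,y) within (\<lambda>t. (x, t)) ` {0..})"
    using f by (rule has_derivative_subset) (use assms in \<open>auto simp: Qd_def\<close>)
  from has_derivative_in_compose[OF i this]
  show ?thesis unfolding has_field_derivative_def
    by (rule has_derivative_eq_rhs) (auto simp: fun_eq_iff)
qed

definition sh1 :: "real \<Rightarrow> (real \<times> real \<times> real \<times> real) list \<Rightarrow> (real \<times> real \<times> real \<times> real) list" where
  "sh1 a ts = map (\<lambda>(c,k1,k2,m). (c/(a-1), k1 - a + 2, k2, m)) ts"
definition sh2 :: "real \<Rightarrow> (real \<times> real \<times> real \<times> real) list \<Rightarrow> (real \<times> real \<times> real \<times> real) list" where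
  "sh2 a ts = map (\<lambda>(c,k1,k2,m). (c/(a-1), k1, k2 - a + 2, m)) ts"

lemma sh_simps[simp]:
  "sh1 a [] = []" "sh1 a ((c,k1,k2,m)#ts) = (c/(a-1), k1 - a + 2, k2, m) # sh1 a ts"
  "sh2 a [] = []" "sh2 a ((c,k1,k2,m)#ts) = (c/(a-1), k1, k2 - a + 2, m) # sh2 a ts"
  by (auto simp: sh1_def sh2_def)

lemma pw_shift:
  fixes x a k :: real
  assumes x: "x > 0" and a: "a > 1"
  shows "(x powr (1/(a-1))) powr k * x powr (1/(a-1) - 1) = (x powr (1/(a-1))) powr (k - a + 2)"
proof -
  have "1/(a-1) * k + (1/(a-1) - 1) = 1/(a-1) * (k - a + 2)"
  proof -
    define q where "q = a - 1"
    have q: "q > 0" "a = q + 1" using a by (auto simp: q_def)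
    show ?thesis unfolding q(2) using q(1) by (simp add: field_simps)
  qed
  then show ?thesis using x by (simp add: powr_powr powr_add[symmetric])
qed

lemma Tsum_shift1:
  assumes xp: "x > 0" and a: "a > 1"
  shows "Tsum g ts (x powr (1/(a-1)), y) * (1/(a-1) * x powr (1/(a-1) - 1)) = Tsum g (sh1 a ts) (x powr (1/(a-1)), y)"
proof (induction ts)
  case Nil then show ?case by simp
next
  case (Cons t ts)
  obtain c k1 k2 m where t: "t = (c,k1,k2,m)" by (cases t) auto
  have e: "T g k1 k2 m (x powr (1/(a-1)), y) * (1/(a-1) * x powr (1/(a-1) - 1)) = 1/(a-1) * T g (k1 - a + 2) k2 m (x powr (1/(a-1)), y)"
    using pw_shift[OF xp a, of k1] by (simp add: T_def algebra_simps)
  have "Tsum g (t#ts) (x powr (1/(a-1)), y) * (1/(a-1) * x powr (1/(a-1) - 1)) = c * (T g k1 k2 m (x powr (1/(a-1)), y) * (1/(a-1) * x powr (1/(a-1) - 1))) + Tsum g ts (x powr (1/(a-1)), y) * (1/(a-1) * x powr (1/(a-1) - 1))"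
    by (simp add: t algebra_simps)
  also have "\<dots> = c * (1/(a-1) * T g (k1 - a + 2) k2 m (x powr (1/(a-1)), y)) + Tsum g (sh1 a ts) (x powr (1/(a-1)), y)"
    unfolding e Cons.IH by (rule refl)
  also have "\<dots> = Tsum g (sh1 a (t#ts)) (x powr (1/(a-1)), y)" by (simp add: t)
  finally show ?case .
qed

lemma Tsum_shift2:
  assumes yp: "y > 0" and a: "a > 1"
  shows "Tsum g ts (x, y powr (1/(a-1))) * (1/(a-1) * y powr (1/(a-1) - 1)) = Tsum g (sh2 a ts) (x, y powr (1/(a-1)))"
proof (induction ts)
  case Nil then show ?case by simp
next
  case (Cons t ts)
  obtain c k1 k2 m where t: "t = (c,k1,k2,m)" by (cases t) auto
  have e: "T g k1 k2 m (x, y powr (1/(a-1))) * (1/(a-1) * y powr (1/(a-1) - 1)) = 1/(a-1) * T g k1 (k2 - a + 2) m (x, y powr (1/(a-1)))"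
    using pw_shift[OF yp a, of k2] by (simp add: T_def algebra_simps)
  have "Tsum g (t#ts) (x, y powr (1/(a-1))) * (1/(a-1) * y powr (1/(a-1) - 1)) = c * (T g k1 k2 m (x, y powr (1/(a-1))) * (1/(a-1) * y powr (1/(a-1) - 1))) + Tsum g ts (x, y powr (1/(a-1))) * (1/(a-1) * y powr (1/(a-1) - 1))"
    by (simp add: t algebra_simps)
  also have "\<dots> = c * (1/(a-1) * T g k1 (k2 - a + 2) m (x, y powr (1/(a-1)))) + Tsum g (sh2 a ts) (x, y powr (1/(a-1)))"
    unfolding e Cons.IH by (rule refl)
  also have "\<dots> = Tsum g (sh2 a (t#ts)) (x, y powr (1/(a-1)))" by (simp add: t)
  finally show ?case .
qed

lemma theta1_deriv:
  assumes ts: "\<forall>(c,k1,k2,m)\<in>set ts. k1 > 1 \<and> k2 > 1 \<and> e0 \<le> k1 \<and> g + m \<ge> 0"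
    and a: "a > 1" and e0: "e0 * (1/(a-1)) > 1" and x: "x \<ge> 0" and y: "y \<ge> 0"
  shows "((\<lambda>t. Tsum g ts (t powr (1/(a-1)), y)) has_real_derivative Tsum g (sh1 a (d1 g ts)) (x powr (1/(a-1)), y)) (at x within {0..})"
proof (cases "x = 0")
  case True
  have z: "Tsum g (sh1 a (d1 g ts)) (x powr (1/(a-1)), y) = 0" using True by (simp add: Tsum_zero1)
  have "((\<lambda>t. Tsum g ts (t powr (1/(a-1)), y)) has_real_derivative 0) (at 0 within {0..})"
  proof (rule deriv0_bound[where d=1 and e="e0 * (1/(a-1))" and C="sabs2 y ts"])
    show "Tsum g ts (0 powr (1 / (a - 1)), y) = 0" by (simp add: Tsum_zero1)
    fix t :: real assume t: "0 < t" "t < 1"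
    have tc: "t powr (1/(a-1)) \<le> 1" using t a by (intro powr_le1) auto
    have "\<bar>Tsum g ts (t powr (1/(a-1)), y)\<bar> \<le> sabs2 y ts * (t powr (1/(a-1))) powr e0"
      using ts tc y by (intro Tsum_bound01) auto
    also have "\<dots> = sabs2 y ts * t powr (e0 * (1/(a-1)))"
      by (simp add: powr_powr mult.commute)
    finally show "\<bar>Tsum g ts (t powr (1/(a-1)), y)\<bar> \<le> sabs2 y ts * t powr (e0 * (1/(a-1)))" .
  qed (use e0 in auto)
  then show ?thesis using True z by simp
next
  case False
  then have xp: "x > 0" using x by simp
  define s where "s = x powr (1/(a-1))"
  have sp: "s > 0" using xp by (simp add: s_def)
  have td: "ts \<noteq> [] \<longrightarrow> True" by simp
  have D: "(Tsum g ts has_derivative (\<lambda>v. fst v * Tsum g (d1 g ts) (s,y) + snd v * Tsum g (d2 g ts) (s,y))) (at (s,y) within Qd)"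
    using ts sp y by (intro Tsum_deriv) (auto simp: Qd_def)
  have D1: "((\<lambda>t. Tsum g ts (t, y)) has_real_derivative Tsum g (d1 g ts) (s,y)) (at s within {0..})"
    by (rule partial1[OF D]) (use sp y in auto)
  have "at s within {0..} = at s"
    using sp by (intro at_within_interior) auto
  with D1 have D1': "((\<lambda>t. Tsum g ts (t, y)) has_real_derivative Tsum g (d1 g ts) (s,y)) (at s)" by simp
  have P: "((\<lambda>t. t powr (1/(a-1))) has_real_derivative (1/(a-1) * x powr (1/(a-1) - 1))) (at x within {0..})"
    using has_real_derivative_powr[OF xp, of "1/(a-1)"] by (rule has_field_derivative_at_within)
  have "((\<lambda>t. Tsum g ts (t powr (1/(a-1)), y)) has_real_derivative Tsum g (d1 g ts) (s,y) * (1/(a-1) * x powr (1/(a-1) - 1))) (at x within {0..})"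
    using DERIV_chain'[OF P, of "\<lambda>t. Tsum g ts (t, y)"] D1' by (simp add: s_def)
  moreover have "Tsum g (d1 g ts) (s,y) * (1/(a-1) * x powr (1/(a-1) - 1)) = Tsum g (sh1 a (d1 g ts)) (x powr (1/(a-1)), y)"
    unfolding s_def by (rule Tsum_shift1[OF xp a])
  ultimately show ?thesis by simp
qed

lemma theta2_deriv:
  assumes ts: "\<forall>(c,k1,k2,m)\<in>set ts. k1 > 1 \<and> k2 > 1 \<and> e0 \<le> k2 \<and> g + m \<ge> 0"
    and a: "a > 1" and e0: "e0 * (1/(a-1)) > 1" and x: "x \<ge> 0" and y: "y \<ge> 0"
  shows "((\<lambda>t. Tsum g ts (x, t powr (1/(a-1)))) has_real_derivative Tsum g (sh2 a (d2 g ts)) (x, y powr (1/(a-1)))) (at y within {0..})"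
proof (cases "y = 0")
  case True
  have z: "Tsum g (sh2 a (d2 g ts)) (x, y powr (1/(a-1))) = 0" using True by (simp add: Tsum_zero2)
  have "((\<lambda>t. Tsum g ts (x, t powr (1/(a-1)))) has_real_derivative 0) (at 0 within {0..})"
  proof (rule deriv0_bound[where d=1 and e="e0 * (1/(a-1))" and C="sabs1 x ts"])
    show "Tsum g ts (x, 0 powr (1 / (a - 1))) = 0" by (simp add: Tsum_zero2)
    fix t :: real assume t: "0 < t" "t < 1"
    have tc: "t powr (1/(a-1)) \<le> 1" using t a by (intro powr_le1) auto
    have "\<bar>Tsum g ts (x, t powr (1/(a-1)))\<bar> \<le> sabs1 x ts * (t powr (1/(a-1))) powr e0"
      using ts tc x by (intro Tsum_bound02) auto
    also have "\<dots> = sabs1 x ts * t powr (e0 * (1/(a-1)))"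
      by (simp add: powr_powr mult.commute)
    finally show "\<bar>Tsum g ts (x, t powr (1/(a-1)))\<bar> \<le> sabs1 x ts * t powr (e0 * (1/(a-1)))" .
  qed (use e0 in auto)
  then show ?thesis using True z by simp
next
  case False
  then have yp: "y > 0" using y by simp
  define s where "s = y powr (1/(a-1))"
  have sp: "s > 0" using yp by (simp add: s_def)
  have D: "(Tsum g ts has_derivative (\<lambda>v. fst v * Tsum g (d1 g ts) (x,s) + snd v * Tsum g (d2 g ts) (x,s))) (at (x,s) within Qd)"
    using ts sp x by (intro Tsum_deriv) (auto simp: Qd_def)
  have D1: "((\<lambda>t. Tsum g ts (x, t)) has_real_derivative Tsum g (d2 g ts) (x,s)) (at s within {0..})"
    by (rule partial2[OF D]) (use sp x in auto)
  have "at s within {0..} = at s"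
    using sp by (intro at_within_interior) auto
  with D1 have D1': "((\<lambda>t. Tsum g ts (x, t)) has_real_derivative Tsum g (d2 g ts) (x,s)) (at s)" by simp
  have P: "((\<lambda>t. t powr (1/(a-1))) has_real_derivative (1/(a-1) * y powr (1/(a-1) - 1))) (at y within {0..})"
    using has_real_derivative_powr[OF yp, of "1/(a-1)"] by (rule has_field_derivative_at_within)
  have "((\<lambda>t. Tsum g ts (x, t powr (1/(a-1)))) has_real_derivative Tsum g (d2 g ts) (x,s) * (1/(a-1) * y powr (1/(a-1) - 1))) (at y within {0..})"
    using DERIV_chain'[OF P, of "\<lambda>t. Tsum g ts (x, t)"] D1' by (simp add: s_def)
  moreover have "Tsum g (d2 g ts) (x,s) * (1/(a-1) * y powr (1/(a-1) - 1)) = Tsum g (sh2 a (d2 g ts)) (x, y powr (1/(a-1)))"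
    unfolding s_def by (rule Tsum_shift2[OF yp a])
  ultimately show ?thesis by simp
qed



lemma lip1d:
  fixes f f' :: "real \<Rightarrow> real"
  assumes cont: "continuous_on {0..R} f"
    and der: "\<And>x. 0 < x \<Longrightarrow> x < R \<Longrightarrow> (f has_real_derivative f' x) (at x)"
    and bd: "\<And>x. 0 < x \<Longrightarrow> x < R \<Longrightarrow> \<bar>f' x\<bar> \<le> L"
    and x: "x \<in> {0..R}" and y: "y \<in> {0..R}"
  shows "\<bar>f x - f y\<bar> \<le> L * \<bar>x - y\<bar>"
proof -
  have main: "\<bar>f b - f a\<bar> \<le> L * (b - a)" if ab: "a < b" "a \<in> {0..R}" "b \<in> {0..R}" for a b
  proof -
    have "continuous_on {a..b} f" using cont by (rule continuous_on_subset) (use ab in auto)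
    moreover have "\<And>z. a < z \<Longrightarrow> z < b \<Longrightarrow> f differentiable (at z)"
      using der ab by (meson atLeastAtMost_iff le_less_trans less_le_trans real_differentiable_def)
    ultimately obtain l z where z: "a < z" "z < b" "DERIV f z :> l" "f b - f a = (b - a) * l"
      using MVT[OF ab(1)] by blast
    have zr: "0 < z" "z < R" using z ab by auto
    have "l = f' z" using z(3) der[OF zr] by (rule DERIV_unique)
    then have "\<bar>l\<bar> \<le> L" using bd[OF zr] by simp
    then show ?thesis using z(4) ab(1) by (simp add: abs_mult mult.commute mult_right_mono)
  qed
  show ?thesis
  proof (cases x y rule: linorder_cases)
    case less then show ?thesis using main[OF less x y] by (simp add: abs_minus_commute)
  next
    case equal then show ?thesis by simp
  next
    case greater then show ?thesis using main[OF greater y x] by simp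
  qed
qed

lemma phi_lip:
  fixes A Amax X e c q R :: real
  assumes A: "0 \<le> A" "A \<le> Amax" and X: "X \<ge> 0" and e: "e \<ge> 1" and c: "0 < c" "c \<le> 1"
    and q: "q \<ge> 0" and R: "R \<ge> 1"
    and x: "x \<in> {0..R}" and y: "y \<in> {0..R}"
  shows "\<bar>A * x powr e * (1 + X + x powr c) powr (-q) - A * y powr e * (1 + X + y powr c) powr (-q)\<bar>
     \<le> (Amax * (e * R powr (e - 1) + q * c * R powr (e + c - 1))) * \<bar>x - y\<bar>"
proof -
  define f where "f = (\<lambda>x. A * x powr e * (1 + X + x powr c) powr (-q))"
  define f' where "f' = (\<lambda>x. A * ((e * x powr (e - 1)) * (1 + X + x powr c) powr (-q)
       + x powr e * ((-q) * (1 + X + x powr c) powr (-q - 1) * (c * x powr (c - 1)))))"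
  have c1: "continuous_on {0..R} (\<lambda>x::real. x powr e)"
    by (rule continuous_on_powr') (use e in \<open>auto intro: continuous_intros\<close>)
  have c2: "continuous_on {0..R} (\<lambda>x::real. x powr c)"
    by (rule continuous_on_powr') (use c in \<open>auto intro: continuous_intros\<close>)
  have c3: "continuous_on {0..R} (\<lambda>x::real. (1 + X + x powr c) powr (-q))"
  proof (rule continuous_on_powr')
    have "\<forall>x. 1 + X + x powr c > 0" using X powr_ge_zero by (smt (verit))
    then show "\<forall>x\<in>{0..R}. 0 \<le> 1 + X + x powr c \<and> (1 + X + x powr c = 0 \<longrightarrow> 0 < - q)"
      by (metis less_le)
  qed (use c2 in \<open>auto intro!: continuous_intros\<close>)
  have cont: "continuous_on {0..R} f" unfolding f_def
    by (intro continuous_intros c1 c3)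
  have der: "(f has_real_derivative f' x) (at x)" if "0 < x" "x < R" for x
  proof -
    have d1: "((\<lambda>x. x powr e) has_real_derivative e * x powr (e - 1)) (at x)"
      using has_real_derivative_powr[OF that(1)] .
    have d2: "((\<lambda>x. 1 + X + x powr c) has_real_derivative c * x powr (c - 1)) (at x)"
      using has_real_derivative_powr[OF that(1), of c]
      by (auto intro: derivative_eq_intros)
    have pos: "1 + X + x powr c > 0" using X powr_ge_zero[of x c] by linarith
    have d3: "((\<lambda>x. (1 + X + x powr c) powr (-q)) has_real_derivative
        (-q) * (1 + X + x powr c) powr (-q - 1) * (c * x powr (c - 1))) (at x)"
      using DERIV_fun_powr[OF d2 pos, of "-q"] by simp
    have "((\<lambda>x. A * (x powr e * (1 + X + x powr c) powr (-q))) has_real_derivative f' x) (at x)"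
      unfolding f'_def by (intro DERIV_cmult) (rule DERIV_cong[OF DERIV_mult[OF d1 d3]], simp add: algebra_simps)
    then show ?thesis by (simp add: f_def mult.assoc)
  qed
  have bd: "\<bar>f' x\<bar> \<le> Amax * (e * R powr (e - 1) + q * c * R powr (e + c - 1))" if x: "0 < x" "x < R" for x
  proof -
    have S: "1 + X + x powr c \<ge> 1" using X by simp
    have W0: "(1 + X + x powr c) powr (-q) \<le> 1" using powr_mono[OF _ S, of "-q" 0] q S by (simp split: if_splits)
    have W1: "(1 + X + x powr c) powr (-q - 1) \<le> 1" using powr_mono[OF _ S, of "-q-1" 0] q S by (simp split: if_splits)
    have W0': "(1 + X + x powr c) powr (-q) \<ge> 0" "(1 + X + x powr c) powr (-q - 1) \<ge> 0" by auto
    have p1: "x powr (e - 1) \<le> R powr (e - 1)" using x e by (intro powr_mono2) auto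
    have "x powr e * x powr (c - 1) = x powr (e + (c - 1))" using x by (simp add: powr_add[symmetric])
    also have "e + (c - 1) = e + c - 1" by simp
    finally have "x powr e * x powr (c - 1) = x powr (e + c - 1)" .
    moreover have "x powr (e + c - 1) \<le> R powr (e + c - 1)" using x e c by (intro powr_mono2) auto
    ultimately have p2: "x powr e * x powr (c - 1) \<le> R powr (e + c - 1)" by simp
    have t1: "\<bar>(e * x powr (e - 1)) * (1 + X + x powr c) powr (-q)\<bar> \<le> e * R powr (e - 1)"
    proof -
      have "\<bar>(e * x powr (e - 1)) * (1 + X + x powr c) powr (-q)\<bar> = (e * x powr (e - 1)) * (1 + X + x powr c) powr (-q)"
        using e by simp
      also have "\<dots> \<le> (e * R powr (e - 1)) * 1"
        using e p1 W0 W0' by (intro mult_mono) auto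
      finally show ?thesis by simp
    qed
    have t2: "\<bar>x powr e * ((-q) * (1 + X + x powr c) powr (-q - 1) * (c * x powr (c - 1)))\<bar> \<le> q * c * R powr (e + c - 1)"
    proof -
      have "\<bar>x powr e * ((-q) * (1 + X + x powr c) powr (-q - 1) * (c * x powr (c - 1)))\<bar>
          = (q * c) * ((x powr e * x powr (c - 1)) * (1 + X + x powr c) powr (-q - 1))"
        using q c by (simp add: abs_mult algebra_simps)
      also have "\<dots> \<le> (q * c) * (R powr (e + c - 1) * 1)"
        using q c p2 W1 W0' by (intro mult_left_mono mult_mono) auto
      finally show ?thesis by simp
    qed
    have tt: "\<bar>(e * x powr (e - 1)) * (1 + X + x powr c) powr (-q) + x powr e * ((-q) * (1 + X + x powr c) powr (-q - 1) * (c * x powr (c - 1)))\<bar>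
       \<le> e * R powr (e - 1) + q * c * R powr (e + c - 1)"
      using t1 t2 abs_triangle_ineq[of "(e * x powr (e - 1)) * (1 + X + x powr c) powr (-q)" "x powr e * ((-q) * (1 + X + x powr c) powr (-q - 1) * (c * x powr (c - 1)))"]
      by linarith
    have "\<bar>f' x\<bar> \<le> A * (e * R powr (e - 1) + q * c * R powr (e + c - 1))"
      unfolding f'_def abs_mult using tt A by (intro mult_mono) auto
    also have "\<dots> \<le> Amax * (e * R powr (e - 1) + q * c * R powr (e + c - 1))"
      using A e q c by (intro mult_right_mono) auto
    finally show ?thesis .
  qed
  show ?thesis
    using lip1d[OF cont der bd x y] by (simp add: f_def)
qed



lemma V_eq:
  assumes "x \<ge> 0" "y \<ge> 0"
  shows "T g k1 k2 m (x powr c1, y powr c2) = x powr (c1*k1) * y powr (c2*k2) * (1 + x powr c1 + y powr c2) powr (-(g+m))"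
  by (simp add: T_def powr_powr)

lemma V_lip_box:
  assumes e1: "c1*k1 \<ge> 1" and e2: "c2*k2 \<ge> 1" and c1: "0 < c1" "c1 \<le> 1" and c2: "0 < c2" "c2 \<le> 1"
    and q: "g + m \<ge> 0" and R: "R \<ge> 1"
  shows "\<exists>L. L-lipschitz_on ({0..R} \<times> {0..R}) (\<lambda>u. T g k1 k2 m (fst u powr c1, snd u powr c2))"
proof -
  define q where "q = g + m"
  define E1 where "E1 = c1*k1"
  define E2 where "E2 = c2*k2"
  define L1 where "L1 = R powr E2 * (E1 * R powr (E1 - 1) + q * c1 * R powr (E1 + c1 - 1))"
  define L2 where "L2 = R powr E1 * (E2 * R powr (E2 - 1) + q * c2 * R powr (E2 + c2 - 1))"
  define V where "V = (\<lambda>u. T g k1 k2 m (fst u powr c1, snd u powr c2))"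
  have Vf: "V (x, y) = y powr E2 * x powr E1 * (1 + y powr c2 + x powr c1) powr (-q)" if "x \<ge> 0" "y \<ge> 0" for x y
    using V_eq[OF that, of g k1 k2 m c1 c2] by (simp add: V_def E1_def E2_def q_def ac_simps)
  have Vs: "V (x, y) = x powr E1 * y powr E2 * (1 + x powr c1 + y powr c2) powr (-q)" if "x \<ge> 0" "y \<ge> 0" for x y
    using V_eq[OF that, of g k1 k2 m c1 c2] by (simp add: V_def E1_def E2_def q_def ac_simps)
  have E1: "E1 \<ge> 1" "E2 \<ge> 1" using e1 e2 by (auto simp: E1_def E2_def)
  have L1: "L1 \<ge> 0" unfolding L1_def using q c1 e1 by (simp add: q_def E1_def)
  have L2: "L2 \<ge> 0" unfolding L2_def using q c2 e2 by (simp add: q_def E2_def)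
  have "(L1 + L2)-lipschitz_on ({0..R} \<times> {0..R}) V"
  proof (rule lipschitz_onI)
    fix u v assume uv: "u \<in> {0..R} \<times> {0..R}" "v \<in> {0..R} \<times> {0..R}"
    obtain u1 u2 where u: "u = (u1, u2)" by (cases u)
    obtain v1 v2 where v: "v = (v1, v2)" by (cases v)
    have r: "u1 \<in> {0..R}" "u2 \<in> {0..R}" "v1 \<in> {0..R}" "v2 \<in> {0..R}" using uv u v by auto
    have a: "\<bar>V (u1, u2) - V (v1, u2)\<bar> \<le> L1 * \<bar>u1 - v1\<bar>"
    proof -
      have "u2 powr E2 \<le> R powr E2" using r E1 by (intro powr_mono2) auto
      have "\<bar>V (u1, u2) - V (v1, u2)\<bar> = \<bar>u2 powr E2 * u1 powr E1 * (1 + u2 powr c2 + u1 powr c1) powr (-q) - u2 powr E2 * v1 powr E1 * (1 + u2 powr c2 + v1 powr c1) powr (-q)\<bar>"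
        using r by (simp add: Vf)
      also have "\<dots> \<le> L1 * \<bar>u1 - v1\<bar>" unfolding L1_def
        using r E1 c1 q R \<open>u2 powr E2 \<le> R powr E2\<close> by (intro phi_lip) (auto simp: q_def)
      finally show ?thesis .
    qed
    have b: "\<bar>V (v1, u2) - V (v1, v2)\<bar> \<le> L2 * \<bar>u2 - v2\<bar>"
    proof -
      have "v1 powr E1 \<le> R powr E1" using r E1 by (intro powr_mono2) auto
      have "\<bar>V (v1, u2) - V (v1, v2)\<bar> = \<bar>v1 powr E1 * u2 powr E2 * (1 + v1 powr c1 + u2 powr c2) powr (-q) - v1 powr E1 * v2 powr E2 * (1 + v1 powr c1 + v2 powr c2) powr (-q)\<bar>"
        using r by (simp add: Vs)
      also have "\<dots> \<le> L2 * \<bar>u2 - v2\<bar>" unfolding L2_def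
        using r E1 c2 q R \<open>v1 powr E1 \<le> R powr E1\<close> by (intro phi_lip) (auto simp: q_def)
      finally show ?thesis .
    qed
    have d1: "\<bar>u1 - v1\<bar> \<le> dist u v" using dist_fst_le[of u v] by (simp add: u v dist_real_def)
    have d2: "\<bar>u2 - v2\<bar> \<le> dist u v" using dist_snd_le[of u v] by (simp add: u v dist_real_def)
    have "\<bar>V u - V v\<bar> \<le> L1 * \<bar>u1 - v1\<bar> + L2 * \<bar>u2 - v2\<bar>"
      unfolding u v using a b by linarith
    also have "\<dots> \<le> L1 * dist u v + L2 * dist u v"
      using L1 L2 d1 d2 by (intro add_mono mult_left_mono) auto
    finally show "dist (V u) (V v) \<le> (L1 + L2) * dist u v" by (simp add: dist_real_def algebra_simps)
  qed (use L1 L2 in auto)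
  then show ?thesis unfolding V_def by blast
qed

lemma LL_cong:
  assumes "locally_lipschitz_on S f" "\<And>x. x \<in> S \<Longrightarrow> f x = g x"
  shows "locally_lipschitz_on S g"
  using assms unfolding locally_lipschitz_on_def lipschitz_on_def by (metis IntD2)

lemma LL_add:
  assumes "locally_lipschitz_on S f" "locally_lipschitz_on S g"
  shows "locally_lipschitz_on S (\<lambda>x. f x + g x)"
  unfolding locally_lipschitz_on_def
proof
  fix x assume x: "x \<in> S"
  obtain e1 L1 where 1: "e1 > 0" "L1-lipschitz_on (cball x e1 \<inter> S) f" using assms(1) x unfolding locally_lipschitz_on_def by blast
  obtain e2 L2 where 2: "e2 > 0" "L2-lipschitz_on (cball x e2 \<inter> S) g" using assms(2) x unfolding locally_lipschitz_on_def by blast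
  have s1: "cball x (min e1 e2) \<inter> S \<subseteq> cball x e1 \<inter> S" "cball x (min e1 e2) \<inter> S \<subseteq> cball x e2 \<inter> S" by auto
  have "(L1+L2)-lipschitz_on (cball x (min e1 e2) \<inter> S) (\<lambda>x. f x + g x)"
    by (intro lipschitz_on_add lipschitz_on_subset[OF 1(2) s1(1)] lipschitz_on_subset[OF 2(2) s1(2)])
  then show "\<exists>e>0. \<exists>L. L-lipschitz_on (cball x e \<inter> S) (\<lambda>x. f x + g x)" using 1 2 by (intro exI[of _ "min e1 e2"]) auto
qed

lemma LL_cmult:
  assumes "locally_lipschitz_on S f"
  shows "locally_lipschitz_on S (\<lambda>x. c * f x)"
  unfolding locally_lipschitz_on_def
proof
  fix x assume x: "x \<in> S"
  obtain e L where 1: "e > 0" "L-lipschitz_on (cball x e \<inter> S) f" using assms x unfolding locally_lipschitz_on_def by blast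
  show "\<exists>e>0. \<exists>L. L-lipschitz_on (cball x e \<inter> S) (\<lambda>x. c * f x)"
    using 1 lipschitz_on_cmult_real[OF 1(2), of c] by blast
qed

lemma LL_const: "locally_lipschitz_on S (\<lambda>x. c)"
  unfolding locally_lipschitz_on_def using lipschitz_on_constant by (metis zero_less_one)

lemma V_LL:
  assumes e1: "c1*k1 \<ge> 1" and e2: "c2*k2 \<ge> 1" and c1: "0 < c1" "c1 \<le> 1" and c2: "0 < c2" "c2 \<le> 1"
    and q: "g + m \<ge> 0"
  shows "locally_lipschitz_on Qd (\<lambda>u. T g k1 k2 m (fst u powr c1, snd u powr c2))"
  unfolding locally_lipschitz_on_def
proof
  fix x :: "real \<times> real" assume x: "x \<in> Qd"
  define R where "R = norm x + 2"
  have R: "R \<ge> 1" by (simp add: R_def)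
  obtain L where L: "L-lipschitz_on ({0..R} \<times> {0..R}) (\<lambda>u. T g k1 k2 m (fst u powr c1, snd u powr c2))"
    using V_lip_box[OF e1 e2 c1 c2 q R] by blast
  have sub: "cball x 1 \<inter> Qd \<subseteq> {0..R} \<times> {0..R}"
  proof
    fix u assume u: "u \<in> cball x 1 \<inter> Qd"
    have "norm u \<le> norm x + 1" using u norm_triangle_ineq2[of u x] by (auto simp: dist_norm norm_minus_commute)
    moreover have "norm (fst u) \<le> norm u" "norm (snd u) \<le> norm u"
      by (metis norm_fst_le prod.collapse) (metis norm_snd_le prod.collapse)
    ultimately show "u \<in> {0..R} \<times> {0..R}" using u by (cases u) (auto simp: Qd_def R_def)
  qed
  show "\<exists>e>0. \<exists>L. L-lipschitz_on (cball x e \<inter> Qd) (\<lambda>u. T g k1 k2 m (fst u powr c1, snd u powr c2))"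
    using lipschitz_on_subset[OF L sub] by (intro exI[of _ 1]) auto
qed

lemma Tsum_LL:
  assumes "\<forall>(c,k1,k2,m)\<in>set ts. c1*k1 \<ge> 1 \<and> c2*k2 \<ge> 1 \<and> g + m \<ge> 0"
    and c1: "0 < c1" "c1 \<le> 1" and c2: "0 < c2" "c2 \<le> 1"
  shows "locally_lipschitz_on Qd (\<lambda>u. Tsum g ts (fst u powr c1, snd u powr c2))"
  using assms(1)
proof (induction ts)
  case Nil
  then show ?case by (simp add: LL_const)
next
  case (Cons t ts)
  obtain c k1 k2 m where t: "t = (c,k1,k2,m)" by (cases t) auto
  have "locally_lipschitz_on Qd (\<lambda>u. c * T g k1 k2 m (fst u powr c1, snd u powr c2) + Tsum g ts (fst u powr c1, snd u powr c2))"
    using Cons t c1 c2 by (intro LL_add LL_cmult V_LL) auto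
  then show ?case by (simp add: t)
qed



lemma rpow_pos: "r > 0 \<Longrightarrow> rpow r b = r powr b"
  by (simp add: rpow_def)

lemma rpow_nz: "b \<noteq> 0 \<Longrightarrow> rpow r b = r powr b"
  by (simp add: rpow_def)

lemma F_good:
  fixes a :: real
  assumes a: "a \<ge> 2"
  shows "cond_F (\<lambda>r. r powr a / a) (\<lambda>r. r powr (a-1)) (\<lambda>r. (a-1) * rpow r (a-2))"
    and "near0_F (\<lambda>r. (a-1) * rpow r (a-2)) 1"
proof -
  have d1: "((\<lambda>r. r powr a / a) has_real_derivative r powr (a-1)) (at r within {0..})" if r: "r \<ge> 0" for r
  proof -
    have "((\<lambda>r. r powr a / a) has_real_derivative a * r powr (a-1) / a) (at r within {0..})"
      using pw_deriv[of a r] a r by (intro DERIV_cdivide) auto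
    then show ?thesis using a by simp
  qed
  have d2: "((\<lambda>r. r powr (a-1)) has_real_derivative (a-1) * rpow r (a-2)) (at r within {0..})" if r: "r \<ge> 0" for r
  proof (cases "a = 2")
    case True
    have "((\<lambda>r. r) has_real_derivative 1) (at r within {0..})" by (rule DERIV_ident)
    then have "((\<lambda>r. r powr (a-1)) has_real_derivative 1) (at r within {0..})"
      by (rule has_field_derivative_transform_within[where d=1]) (use r True in auto)
    moreover have "(a-1) * rpow r (a-2) = 1" using True by (simp add: rpow_def)
    ultimately show ?thesis by simp
  next
    case False
    then have "a > 2" using a by simp
    then have "((\<lambda>r. r powr (a-1)) has_real_derivative (a-1) * r powr (a-1-1)) (at r within {0..})"
      using r by (intro pw_deriv) auto
    then show ?thesis using \<open>a > 2\<close> by (simp add: rpow_nz)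
  qed
  have cont: "continuous_on {0..} (\<lambda>r. (a-1) * rpow r (a-2))"
  proof (cases "a = 2")
    case True
    have "(\<lambda>r. (a-1) * rpow r (a-2)) = (\<lambda>r. 1)" using True by (auto simp: rpow_def fun_eq_iff)
    then show ?thesis by (metis continuous_on_const)
  next
    case False
    then have a2: "a > 2" using a by simp
    have "continuous_on {0..} (\<lambda>r::real. (a-1) * r powr (a-2))"
      by (intro continuous_intros continuous_on_powr') (use a2 in auto)
    then show ?thesis using a2 by (simp add: rpow_nz)
  qed
  have lim1: "Liminf at_top (\<lambda>r. ereal ((a-1) * rpow r (a-2))) > 0"
  proof -
    have "eventually (\<lambda>r. ereal (a-1) \<le> ereal ((a-1) * rpow r (a-2))) at_top"
    proof (rule eventually_mono[OF eventually_ge_at_top[of 1]])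
      fix r :: real assume r: "r \<ge> 1"
      have "1 \<le> r powr (a-2)" using r a by (intro ge_one_powr_ge_zero) auto
      then have "(a-1) * 1 \<le> (a-1) * rpow r (a-2)" using r a by (simp add: rpow_pos)
      then show "ereal (a-1) \<le> ereal ((a-1) * rpow r (a-2))" by simp
    qed
    then have "ereal (a-1) \<le> Liminf at_top (\<lambda>r. ereal ((a-1) * rpow r (a-2)))"
      by (rule Liminf_bounded)
    moreover have "ereal (a-1) > 0" using a by simp
    ultimately show ?thesis by order
  qed
  have lim2: "Limsup at_top (\<lambda>r. ereal (r powr (a-1) / (r powr a / a))) < \<infinity>"
  proof -
    have "eventually (\<lambda>r. ereal (r powr (a-1) / (r powr a / a)) \<le> ereal a) at_top"
    proof (rule eventually_mono[OF eventually_ge_at_top[of 1]])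
      fix r :: real assume r: "r \<ge> 1"
      have e: "r powr a = r powr (a-1) * r" using r by (simp add: powr_diff)
      have p: "r powr (a-1) \<noteq> 0" using r by simp
      have "r powr (a-1) / (r powr a / a) = r powr (a-1) / (r powr (a-1) * r / a)" by (simp only: e)
      also have "\<dots> = a / r" using p by simp
      also have "\<dots> \<le> a" using r a by (simp add: divide_le_eq)
      finally show "ereal (r powr (a-1) / (r powr a / a)) \<le> ereal a" by simp
    qed
    then have "Limsup at_top (\<lambda>r. ereal (r powr (a-1) / (r powr a / a))) \<le> ereal a"
      by (rule Limsup_bounded)
    moreover have "ereal a < \<infinity>" by simp
    ultimately show ?thesis by (rule le_less_trans)
  qed
  have ineq: "r powr a / a - r * r powr (a-1) + r\<^sup>2 * ((a-1) * rpow r (a-2)) \<ge> 0" if r: "r \<ge> 0" for r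
  proof (cases "r = 0")
    case True then show ?thesis using a by simp
  next
    case False
    then have rp: "r > 0" using r by simp
    have "1/a > 0" using a by simp
    have e1: "r * r powr (a-1) = r powr a" using rp by (simp add: powr_diff)
    have e2: "r\<^sup>2 * r powr (a-2) = r powr a" using rp by (simp add: powr_diff power2_eq_square)
    have "r powr a / a - r * r powr (a-1) + r\<^sup>2 * ((a-1) * rpow r (a-2)) = r powr a * (1/a + a - 2)"
      using rp e1 e2 by (simp add: rpow_pos algebra_simps)
    moreover have "1/a + a - 2 \<ge> 0" using a \<open>1/a > 0\<close> by linarith
    ultimately show ?thesis using rp by simp
  qed
  show "cond_F (\<lambda>r. r powr a / a) (\<lambda>r. r powr (a-1)) (\<lambda>r. (a-1) * rpow r (a-2))"
    unfolding cond_F_def C2_nonneg_def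
    using d1 d2 cont lim1 lim2 ineq a by (auto simp: rpow_pos)
  show "near0_F (\<lambda>r. (a-1) * rpow r (a-2)) 1"
    unfolding near0_F_def using a by (intro exI[of _ "a-1"] exI[of _ "a-2"]) auto
qed



lemma min_bound:
  fixes D S P X1 X2 X3 :: real
  assumes "\<bar>D\<bar> \<le> S * (P * 1)" "\<bar>D\<bar> \<le> S * (P * X1)" "\<bar>D\<bar> \<le> S * (P * X2)" "\<bar>D\<bar> \<le> S * (P * X3)"
  shows "\<bar>D\<bar> \<le> S * (P * min 1 (min X1 (min X2 X3)))"
  using assms by (cases rule: linorder_cases[of 1 "min X1 (min X2 X3)"]; simp add: min_def)

lemma bound_case:
  assumes x: "x > 0" and y: "y > 0"
    and Ha: "\<forall>(c,k1,k2,m)\<in>set ts. ea1 \<le> k1 \<and> ea2 \<le> k2 \<and> k1 - ea1 + (k2 - ea2) \<le> g + m"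
    and Hb: "\<forall>(c,k1,k2,m)\<in>set ts. eb1 \<le> k1 \<and> eb2 \<le> k2 \<and> k1 - eb1 + (k2 - eb2) \<le> g + m"
    and Hc: "\<forall>(c,k1,k2,m)\<in>set ts. ec1 \<le> k1 \<and> ec2 \<le> k2 \<and> k1 - ec1 + (k2 - ec2) \<le> g + m"
    and Hd: "\<forall>(c,k1,k2,m)\<in>set ts. ed1 \<le> k1 \<and> ed2 \<le> k2 \<and> k1 - ed1 + (k2 - ed2) \<le> g + m"
    and Pa: "x powr ea1 * y powr ea2 = P * 1"
    and Pb: "x powr eb1 * y powr eb2 = P * X1"
    and Pc: "x powr ec1 * y powr ec2 = P * X2"
    and Pd: "x powr ed1 * y powr ed2 = P * X3"
  shows "\<bar>Tsum g ts (x, y)\<bar> \<le> sabs ts * (P * min 1 (min X1 (min X2 X3)))"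
  apply (rule min_bound)
  using Tsum_bound[OF x y Ha] Tsum_bound[OF x y Hb] Tsum_bound[OF x y Hc] Tsum_bound[OF x y Hd] Pa Pb Pc Pd
  by auto

lemma sabs_nonneg: "sabs ts \<ge> 0"
  by (induction ts) (auto simp: sabs_def)

lemma final_bound:
  fixes a :: real
  assumes D: "\<bar>D\<bar> \<le> sabs ts * (P * M)" and a: "a \<ge> 2" and P: "P \<ge> 0" and M: "M \<ge> 0"
  shows "\<bar>D\<bar> \<le> ((sabs ts + 1) / (a - 1)) * ((a - 1) * P) * M"
proof -
  have "((sabs ts + 1) / (a - 1)) * ((a - 1) * P) * M = (sabs ts + 1) * (P * M)"
    using a by (simp add: field_simps)
  moreover have "sabs ts * (P * M) \<le> (sabs ts + 1) * (P * M)"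
    using P M by (intro mult_right_mono) auto
  ultimately show ?thesis using D by linarith
qed

lemma inv_F':
  fixes a t :: real
  assumes a: "a \<ge> 2" and t: "t \<ge> 0"
  shows "inv_into {0..} (\<lambda>r. r powr (a-1)) t = t powr (1/(a-1))"
proof (rule inv_into_f_eq)
  show "inj_on (\<lambda>r. r powr (a-1)) {0..}"
  proof (rule inj_onI)
    fix x y :: real assume xy: "x \<in> {0..}" "y \<in> {0..}" "x powr (a-1) = y powr (a-1)"
    have e: "(z powr (a-1)) powr (1/(a-1)) = z" if "z \<ge> 0" for z :: real
    proof -
      have "(a-1) * (1/(a-1)) = 1" using a by simp
      then show ?thesis using that by (simp add: powr_powr)
    qed
    have "x = (x powr (a-1)) powr (1/(a-1))" using e[of x] xy(1) by simp
    also have "\<dots> = (y powr (a-1)) powr (1/(a-1))" using xy by simp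
    also have "\<dots> = y" using e[of y] xy(2) by simp
    finally show "x = y" .
  qed
  show "t powr (1/(a-1)) \<in> {0..}" by simp
  show "(t powr (1/(a-1))) powr (a-1) = t" using a t by (simp add: powr_powr)
qed

lemma c_gt1:
  fixes a e :: real
  assumes "a \<ge> 2" "e > a - 1"
  shows "e * (1/(a-1)) > 1"
  using assms by (simp add: field_simps)

lemma Tsum_LL':
  assumes "\<forall>(c,k1,k2,m)\<in>set ts. a1 - 1 \<le> k1 \<and> a2 - 1 \<le> k2 \<and> g + m \<ge> 0"
    and a1: "a1 \<ge> 2" and a2: "a2 \<ge> 2"
  shows "locally_lipschitz_on Qd (\<lambda>u. Tsum g ts (fst u powr (1/(a1-1)), snd u powr (1/(a2-1))))"
proof (rule Tsum_LL)
  have *: "1 \<le> 1/(a-1) * k" if "a \<ge> 2" "a - 1 \<le> k" for a k :: real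
    using that by (simp add: field_simps)
  show "\<forall>(c,k1,k2,m)\<in>set ts. 1 \<le> 1/(a1-1) * k1 \<and> 1 \<le> 1/(a2-1) * k2 \<and> 0 \<le> g + m"
    using assms(1) *[OF a1] *[OF a2] by fastforce
qed (use a1 a2 in auto)


lemma rpow_nonneg: "r \<ge> 0 \<Longrightarrow> rpow r b \<ge> 0"
  by (simp add: rpow_def)

lemma sqrt_div_powr:
  assumes x: "x > 0" and y: "y > 0"
  shows "sqrt (x / y) = x powr (1/2) * y powr (-1/2)"
proof -
  have 1: "x powr (1/2) = sqrt x" by (rule powr_half_sqrt) (use x in auto)
  have 2: "y powr (1/2) = sqrt y" by (rule powr_half_sqrt) (use y in auto)
  have 3: "y powr (-1/2) = inverse (y powr (1/2))"
    using powr_minus[of y "1/2"] by simp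
  show ?thesis unfolding 1 3 2 by (metis real_sqrt_divide divide_inverse)
qed

lemma bound_full:
  assumes x: "x > 0" and y: "y > 0" and a: "a \<ge> 2" and P: "P \<ge> 0"
    and Ha: "\<forall>(c,k1,k2,m)\<in>set ts. ea1 \<le> k1 \<and> ea2 \<le> k2 \<and> k1 - ea1 + (k2 - ea2) \<le> g + m"
    and Hb: "\<forall>(c,k1,k2,m)\<in>set ts. eb1 \<le> k1 \<and> eb2 \<le> k2 \<and> k1 - eb1 + (k2 - eb2) \<le> g + m"
    and Hc: "\<forall>(c,k1,k2,m)\<in>set ts. ec1 \<le> k1 \<and> ec2 \<le> k2 \<and> k1 - ec1 + (k2 - ec2) \<le> g + m"
    and Hd: "\<forall>(c,k1,k2,m)\<in>set ts. ed1 \<le> k1 \<and> ed2 \<le> k2 \<and> k1 - ed1 + (k2 - ed2) \<le> g + m"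
    and Pa: "x powr ea1 * y powr ea2 = P * 1"
    and Pb: "x powr eb1 * y powr eb2 = P * X1"
    and Pc: "x powr ec1 * y powr ec2 = P * X2"
    and Pd: "x powr ed1 * y powr ed2 = P * X3"
    and M: "min 1 (min X1 (min X2 X3)) \<ge> 0"
    and Fpp: "Fpp = (a - 1) * P"
  shows "\<bar>Tsum g ts (x, y)\<bar> \<le> ((sabs ts + 1) / (a - 1)) * Fpp * min 1 (min X1 (min X2 X3))"
  unfolding Fpp
  by (rule final_bound[OF bound_case[OF x y Ha Hb Hc Hd Pa Pb Pc Pd] a P M])



lemma zero_rhs:
  fixes D K F M :: real
  shows "D = 0 \<Longrightarrow> K > 0 \<Longrightarrow> F \<ge> 0 \<Longrightarrow> M \<ge> 0 \<Longrightarrow> \<bar>D\<bar> \<le> K * F * M"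
  by simp

lemma sufficiency:
  fixes a1 a2 b1 b2 \<gamma> :: real
  assumes g: "\<gamma> > 0" and a1: "a1 \<ge> 2" and a2: "a2 \<ge> 2" and b1: "b1 \<ge> 2 * a1 - 1" and b2: "b2 \<ge> 2 * a2 - 1"
    and bb: "b1 + b2 \<le> \<gamma> + min a1 a2"
  shows "all_conditions (\<lambda>r. r powr a1 / a1) (\<lambda>r. r powr a2 / a2)
            (\<lambda>(r1, r2). r1 powr b1 * r2 powr b2 / (1 + r1 + r2) powr \<gamma>)"
proof -
  define h where "h = (\<lambda>(r1::real, r2::real). r1 powr b1 * r2 powr b2 / (1 + r1 + r2) powr \<gamma>)"
  define hs where "hs = [(1::real, b1, b2, 0::real)]"
  define F1' where "F1' = (\<lambda>r::real. r powr (a1-1))"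
  define F2' where "F2' = (\<lambda>r::real. r powr (a2-1))"
  define F1'' where "F1'' = (\<lambda>r::real. (a1-1) * rpow r (a1-2))"
  define F2'' where "F2'' = (\<lambda>r::real. (a2-1) * rpow r (a2-2))"
  define dd where "dd = (\<lambda>i::nat. if i = 1 then d1 \<gamma> else d2 \<gamma>)"
  define Dh where "Dh = (\<lambda>j p. Tsum \<gamma> (dd j hs) p)"
  define D2h where "D2h = (\<lambda>j i p. Tsum \<gamma> (dd i (dd j hs)) p)"
  define c1 where "c1 = 1/(a1-1)"
  define c2 where "c2 = 1/(a2-1)"
  have mina: "b1 + b2 \<le> \<gamma> + a1" "b1 + b2 \<le> \<gamma> + a2" using bb by auto
  have hsd: "d1 \<gamma> hs = [(b1, b1-1, b2, 0), (-\<gamma>, b1, b2, 1)]" "d2 \<gamma> hs = [(b2, b1, b2-1, 0), (-\<gamma>, b1, b2, 1)]"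
    by (simp_all add: hs_def)
  have hT: "h p = Tsum \<gamma> hs p" if "p \<in> Qd" for p
  proof -
    obtain x y where p: "p = (x, y)" by (cases p)
    have "1 + x + y > 0" using that p by (auto simp: Qd_def)
    then show ?thesis by (simp add: p h_def hs_def T_def powr_minus divide_inverse)
  qed
  have C2: "C2_quadrant h Dh D2h"
    unfolding C2_quadrant_def
  proof (intro conjI ballI)
    fix p assume p: "p \<in> Qd"
    have "(Tsum \<gamma> hs has_derivative (\<lambda>v. fst v * Tsum \<gamma> (d1 \<gamma> hs) p + snd v * Tsum \<gamma> (d2 \<gamma> hs) p)) (at p within Qd)"
      using p b1 b2 a1 a2 by (intro Tsum_deriv) (auto simp: hs_def)
    then have "(Tsum \<gamma> hs has_derivative (\<lambda>v. fst v * Dh 1 p + snd v * Dh 2 p)) (at p within Qd)"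
      by (simp add: Dh_def dd_def)
    then show "(h has_derivative (\<lambda>v. fst v * Dh 1 p + snd v * Dh 2 p)) (at p within Qd)"
      by (rule has_derivative_transform_within[where d=1]) (use p hT in auto)
  next
    fix p j assume p: "p \<in> Qd" and j: "j \<in> {1::nat, 2}"
    have "(Tsum \<gamma> (dd j hs) has_derivative (\<lambda>v. fst v * Tsum \<gamma> (d1 \<gamma> (dd j hs)) p + snd v * Tsum \<gamma> (d2 \<gamma> (dd j hs)) p)) (at p within Qd)"
      using p b1 b2 a1 a2 j by (intro Tsum_deriv) (auto simp: dd_def hsd)
    then show "(Dh j has_derivative (\<lambda>v. fst v * D2h j 1 p + snd v * D2h j 2 p)) (at p within Qd)"
      unfolding Dh_def D2h_def by (simp add: dd_def)
  next
    fix i j assume j: "j \<in> {1::nat, 2}" and i: "i \<in> {1::nat, 2}"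
    show "continuous_on Qd (D2h j i)"
      unfolding D2h_def using i j b1 b2 a1 a2
      by (intro Tsum_cont) (auto simp: dd_def hsd)
  qed
  have condh: "cond_h h Dh D2h"
    unfolding cond_h_def using C2
    by (auto simp: h_def Dh_def Tsum_zero1 Tsum_zero2)
  have a1': "a1 > 1" and a2': "a2 > 1" using a1 a2 by auto
  have thetaeq: "theta F1' F2' Dh j (x, y) = Tsum \<gamma> (dd j hs) (x powr c1, y powr c2)" if "x \<ge> 0" "y \<ge> 0" for j x y
    using that by (simp add: theta_def Dh_def F1'_def F2'_def inv_F'[OF a1] inv_F'[OF a2] c1_def c2_def)
  have ddj: "\<forall>(c,k1,k2,m)\<in>set (dd j hs). k1 > 1 \<and> k2 > 1 \<and> b1 - 1 \<le> k1 \<and> b2 - 1 \<le> k2 \<and> \<gamma> + m \<ge> 0"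
    if "j \<in> {1,2}" for j
    using that b1 b2 a1 a2 g by (auto simp: dd_def hsd)
  have e01: "(b1 - 1) * (1/(a1-1)) > 1" using a1 b1 by (intro c_gt1) auto
  have e02: "(b2 - 1) * (1/(a2-1)) > 1" using a2 b2 by (intro c_gt1) auto
  have A: "\<exists>\<theta>ji. (\<forall>u\<in>Qd. ((\<lambda>t. theta F1' F2' Dh j (upd i t u)) has_real_derivative \<theta>ji u)
                          (at (coord i u) within {0..})) \<and> locally_lipschitz_on Qd \<theta>ji"
    if j: "j \<in> {1,2}" and i: "i \<in> {1,2}" for j i
  proof (cases "i = 1")
    case True
    define th where "th = (\<lambda>u. Tsum \<gamma> (sh1 a1 (d1 \<gamma> (dd j hs))) (fst u powr c1, snd u powr c2))"
    have D: "((\<lambda>t. theta F1' F2' Dh j (upd i t u)) has_real_derivative th u) (at (coord i u) within {0..})"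
      if u: "u \<in> Qd" for u
    proof -
      obtain x y where uxy: "u = (x, y)" by (cases u)
      have xy: "x \<ge> 0" "y \<ge> 0" using u uxy by (auto simp: Qd_def)
      have "((\<lambda>t. Tsum \<gamma> (dd j hs) (t powr (1/(a1-1)), y powr c2)) has_real_derivative
          Tsum \<gamma> (sh1 a1 (d1 \<gamma> (dd j hs))) (x powr (1/(a1-1)), y powr c2)) (at x within {0..})"
        by (rule theta1_deriv[where ?e0.0="b1 - 1"]) (use ddj[OF j] a1' e01 xy in auto)
      then have "((\<lambda>t. theta F1' F2' Dh j (upd i t u)) has_real_derivative
          Tsum \<gamma> (sh1 a1 (d1 \<gamma> (dd j hs))) (x powr (1/(a1-1)), y powr c2)) (at x within {0..})"
        by (rule has_field_derivative_transform_within[where d=1])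
           (use xy in \<open>auto simp: True upd_def uxy thetaeq c1_def\<close>)
      then show ?thesis by (simp add: th_def uxy coord_def True c1_def)
    qed
    have L: "locally_lipschitz_on Qd th"
      unfolding th_def c1_def c2_def
      using j b1 b2 a1 a2 g by (intro Tsum_LL') (auto simp: dd_def hsd)
    show ?thesis using D L by blast
  next
    case False
    then have i2: "i = 2" using i by auto
    define th where "th = (\<lambda>u. Tsum \<gamma> (sh2 a2 (d2 \<gamma> (dd j hs))) (fst u powr c1, snd u powr c2))"
    have D: "((\<lambda>t. theta F1' F2' Dh j (upd i t u)) has_real_derivative th u) (at (coord i u) within {0..})"
      if u: "u \<in> Qd" for u
    proof -
      obtain x y where uxy: "u = (x, y)" by (cases u)
      have xy: "x \<ge> 0" "y \<ge> 0" using u uxy by (auto simp: Qd_def)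
      have "((\<lambda>t. Tsum \<gamma> (dd j hs) (x powr c1, t powr (1/(a2-1)))) has_real_derivative
          Tsum \<gamma> (sh2 a2 (d2 \<gamma> (dd j hs))) (x powr c1, y powr (1/(a2-1)))) (at y within {0..})"
        by (rule theta2_deriv[where ?e0.0="b2 - 1"]) (use ddj[OF j] a2' e02 xy in auto)
      then have "((\<lambda>t. theta F1' F2' Dh j (upd i t u)) has_real_derivative
          Tsum \<gamma> (sh2 a2 (d2 \<gamma> (dd j hs))) (x powr c1, y powr (1/(a2-1)))) (at y within {0..})"
        by (rule has_field_derivative_transform_within[where d=1])
           (use xy in \<open>auto simp: i2 upd_def uxy thetaeq c2_def\<close>)
      then show ?thesis by (simp add: th_def uxy coord_def i2 c2_def)
    qed
    have L: "locally_lipschitz_on Qd th"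
      unfolding th_def c1_def c2_def
      using j b1 b2 a1 a2 g by (intro Tsum_LL') (auto simp: dd_def hsd)
    show ?thesis using D L by blast
  qed
  have B11: "\<exists>\<kappa>>0. \<forall>r\<in>Qd. \<bar>D2h 1 1 r\<bar> \<le> \<kappa> * (if (1::nat) = 1 then F1'' else F2'') (coord 1 r) *
            min 1 (min (F1' (fst r)) (min (F2' (snd r)) (sqrt (coord 1 r / coord 1 r))))"
  proof -
    define ts where "ts = dd 1 (dd 1 hs)"
    have tsv: "ts = d1 \<gamma> (d1 \<gamma> hs)" by (simp add: ts_def dd_def)
    have K: "(sabs ts + 1) / (a1 - 1) > 0" using sabs_nonneg[of ts] a1 by (simp add: add_nonneg_pos)
    have "\<forall>r\<in>Qd. \<bar>D2h 1 1 r\<bar> \<le> ((sabs ts + 1) / (a1 - 1)) * F1'' (coord 1 r) *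
            min 1 (min (F1' (fst r)) (min (F2' (snd r)) (sqrt (coord 1 r / coord 1 r))))"
    proof
      fix r assume r: "r \<in> Qd"
      obtain x y where rxy: "r = (x, y)" by (cases r)
      have xy0: "x \<ge> 0" "y \<ge> 0" using r rxy by (auto simp: Qd_def)
      have M: "min 1 (min (x powr (a1-1)) (min (y powr (a2-1)) (sqrt (x / x)))) \<ge> 0"
        using xy0 by simp
      show "\<bar>D2h 1 1 r\<bar> \<le> ((sabs ts + 1) / (a1 - 1)) * F1'' (coord 1 r) *
            min 1 (min (F1' (fst r)) (min (F2' (snd r)) (sqrt (coord 1 r / coord 1 r))))"
      proof (cases "x > 0 \<and> y > 0")
        case True
        then have xy: "x > 0" "y > 0" by auto
        have Ha: "\<forall>(c,k1,k2,m)\<in>set ts. a1-2 \<le> k1 \<and> 0 \<le> k2 \<and> k1 - (a1-2) + (k2 - (0)) \<le> \<gamma> + m"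
        unfolding tsv hsd using b1 b2 mina a1 a2 g by auto
        have Hb: "\<forall>(c,k1,k2,m)\<in>set ts. 2*a1-3 \<le> k1 \<and> 0 \<le> k2 \<and> k1 - (2*a1-3) + (k2 - (0)) \<le> \<gamma> + m"
        unfolding tsv hsd using b1 b2 mina a1 a2 g by auto
        have Hc: "\<forall>(c,k1,k2,m)\<in>set ts. a1-2 \<le> k1 \<and> a2-1 \<le> k2 \<and> k1 - (a1-2) + (k2 - (a2-1)) \<le> \<gamma> + m"
        unfolding tsv hsd using b1 b2 mina a1 a2 g by auto
        have Hd: "\<forall>(c,k1,k2,m)\<in>set ts. a1-2 \<le> k1 \<and> 0 \<le> k2 \<and> k1 - (a1-2) + (k2 - (0)) \<le> \<gamma> + m"
        unfolding tsv hsd using b1 b2 mina a1 a2 g by auto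
        have Pa: "x powr (a1-2) * y powr 0 = x powr (a1-2) * 1" using xy by simp
        have Pb: "x powr (2*a1-3) * y powr 0 = x powr (a1-2) * x powr (a1-1)" using xy by (simp add: powr_add[symmetric])
        have Pc: "x powr (a1-2) * y powr (a2-1) = x powr (a1-2) * y powr (a2-1)" by simp
        have Pd: "x powr (a1-2) * y powr 0 = x powr (a1-2) * sqrt (x / x)" using xy by simp
        have Fpp: "F1'' x = (a1 - 1) * (x powr (a1-2))" using xy by (simp add: F1''_def rpow_pos)
        have "\<bar>Tsum \<gamma> ts (x, y)\<bar> \<le> ((sabs ts + 1) / (a1 - 1)) * F1'' x * min 1 (min (x powr (a1-1)) (min (y powr (a2-1)) (sqrt (x / x))))"
          by (rule bound_full[OF xy a1 _ Ha Hb Hc Hd Pa Pb Pc Pd M Fpp]) simp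
        then show ?thesis by (simp add: D2h_def ts_def rxy coord_def F1'_def F2'_def)
      next
        case False
        then have "x = 0 \<or> y = 0" using xy0 by auto
        then have z: "D2h 1 1 r = 0" by (auto simp: D2h_def rxy Tsum_zero1 Tsum_zero2)
        have "F1'' (coord 1 r) \<ge> 0" using xy0 a1 by (simp add: F1''_def rxy coord_def rpow_nonneg)
        moreover have "min 1 (min (F1' (fst r)) (min (F2' (snd r)) (sqrt (coord 1 r / coord 1 r)))) \<ge> 0"
          using xy0 by (simp add: F1'_def F2'_def rxy coord_def)
        ultimately show ?thesis using z K by (intro zero_rhs) auto
      qed
    qed
    then show ?thesis using K by (intro exI[of _ "(sabs ts + 1) / (a1 - 1)"]) simp
  qed
  have B12: "\<exists>\<kappa>>0. \<forall>r\<in>Qd. \<bar>D2h 1 2 r\<bar> \<le> \<kappa> * (if (2::nat) = 1 then F1'' else F2'') (coord 2 r) *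
            min 1 (min (F1' (fst r)) (min (F2' (snd r)) (sqrt (coord 2 r / coord 1 r))))"
  proof -
    define ts where "ts = dd 2 (dd 1 hs)"
    have tsv: "ts = d2 \<gamma> (d1 \<gamma> hs)" by (simp add: ts_def dd_def)
    have K: "(sabs ts + 1) / (a2 - 1) > 0" using sabs_nonneg[of ts] a2 by (simp add: add_nonneg_pos)
    have "\<forall>r\<in>Qd. \<bar>D2h 1 2 r\<bar> \<le> ((sabs ts + 1) / (a2 - 1)) * F2'' (coord 2 r) *
            min 1 (min (F1' (fst r)) (min (F2' (snd r)) (sqrt (coord 2 r / coord 1 r))))"
    proof
      fix r assume r: "r \<in> Qd"
      obtain x y where rxy: "r = (x, y)" by (cases r)
      have xy0: "x \<ge> 0" "y \<ge> 0" using r rxy by (auto simp: Qd_def)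
      have M: "min 1 (min (x powr (a1-1)) (min (y powr (a2-1)) (sqrt (y / x)))) \<ge> 0"
        using xy0 by simp
      show "\<bar>D2h 1 2 r\<bar> \<le> ((sabs ts + 1) / (a2 - 1)) * F2'' (coord 2 r) *
            min 1 (min (F1' (fst r)) (min (F2' (snd r)) (sqrt (coord 2 r / coord 1 r))))"
      proof (cases "x > 0 \<and> y > 0")
        case True
        then have xy: "x > 0" "y > 0" by auto
        have Ha: "\<forall>(c,k1,k2,m)\<in>set ts. 0 \<le> k1 \<and> a2-2 \<le> k2 \<and> k1 - (0) + (k2 - (a2-2)) \<le> \<gamma> + m"
        unfolding tsv hsd using b1 b2 mina a1 a2 g by auto
        have Hb: "\<forall>(c,k1,k2,m)\<in>set ts. a1-1 \<le> k1 \<and> a2-2 \<le> k2 \<and> k1 - (a1-1) + (k2 - (a2-2)) \<le> \<gamma> + m"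
        unfolding tsv hsd using b1 b2 mina a1 a2 g by auto
        have Hc: "\<forall>(c,k1,k2,m)\<in>set ts. 0 \<le> k1 \<and> 2*a2-3 \<le> k2 \<and> k1 - (0) + (k2 - (2*a2-3)) \<le> \<gamma> + m"
        unfolding tsv hsd using b1 b2 mina a1 a2 g by auto
        have Hd: "\<forall>(c,k1,k2,m)\<in>set ts. -1/2 \<le> k1 \<and> a2-2+1/2 \<le> k2 \<and> k1 - (-1/2) + (k2 - (a2-2+1/2)) \<le> \<gamma> + m"
        unfolding tsv hsd using b1 b2 mina a1 a2 g by auto
        have Pa: "x powr 0 * y powr (a2-2) = y powr (a2-2) * 1" using xy by simp
        have Pb: "x powr (a1-1) * y powr (a2-2) = y powr (a2-2) * x powr (a1-1)" by simp
        have Pc: "x powr 0 * y powr (2*a2-3) = y powr (a2-2) * y powr (a2-1)" using xy by (simp add: powr_add[symmetric])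
        have Pd: "x powr (-1/2) * y powr (a2-2+1/2) = y powr (a2-2) * sqrt (y / x)" unfolding powr_add sqrt_div_powr[OF xy(2) xy(1)] by (simp only: mult_ac)
        have Fpp: "F2'' y = (a2 - 1) * (y powr (a2-2))" using xy by (simp add: F2''_def rpow_pos)
        have "\<bar>Tsum \<gamma> ts (x, y)\<bar> \<le> ((sabs ts + 1) / (a2 - 1)) * F2'' y * min 1 (min (x powr (a1-1)) (min (y powr (a2-1)) (sqrt (y / x))))"
          by (rule bound_full[OF xy a2 _ Ha Hb Hc Hd Pa Pb Pc Pd M Fpp]) simp
        then show ?thesis by (simp add: D2h_def ts_def rxy coord_def F1'_def F2'_def)
      next
        case False
        then have "x = 0 \<or> y = 0" using xy0 by auto
        then have z: "D2h 1 2 r = 0" by (auto simp: D2h_def rxy Tsum_zero1 Tsum_zero2)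
        have "F2'' (coord 2 r) \<ge> 0" using xy0 a2 by (simp add: F2''_def rxy coord_def rpow_nonneg)
        moreover have "min 1 (min (F1' (fst r)) (min (F2' (snd r)) (sqrt (coord 2 r / coord 1 r)))) \<ge> 0"
          using xy0 by (simp add: F1'_def F2'_def rxy coord_def)
        ultimately show ?thesis using z K by (intro zero_rhs) auto
      qed
    qed
    then show ?thesis using K by (intro exI[of _ "(sabs ts + 1) / (a2 - 1)"]) simp
  qed
  have B21: "\<exists>\<kappa>>0. \<forall>r\<in>Qd. \<bar>D2h 2 1 r\<bar> \<le> \<kappa> * (if (1::nat) = 1 then F1'' else F2'') (coord 1 r) *
            min 1 (min (F1' (fst r)) (min (F2' (snd r)) (sqrt (coord 1 r / coord 2 r))))"
  proof -
    define ts where "ts = dd 1 (dd 2 hs)"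
    have tsv: "ts = d1 \<gamma> (d2 \<gamma> hs)" by (simp add: ts_def dd_def)
    have K: "(sabs ts + 1) / (a1 - 1) > 0" using sabs_nonneg[of ts] a1 by (simp add: add_nonneg_pos)
    have "\<forall>r\<in>Qd. \<bar>D2h 2 1 r\<bar> \<le> ((sabs ts + 1) / (a1 - 1)) * F1'' (coord 1 r) *
            min 1 (min (F1' (fst r)) (min (F2' (snd r)) (sqrt (coord 1 r / coord 2 r))))"
    proof
      fix r assume r: "r \<in> Qd"
      obtain x y where rxy: "r = (x, y)" by (cases r)
      have xy0: "x \<ge> 0" "y \<ge> 0" using r rxy by (auto simp: Qd_def)
      have M: "min 1 (min (x powr (a1-1)) (min (y powr (a2-1)) (sqrt (x / y)))) \<ge> 0"
        using xy0 by simp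
      show "\<bar>D2h 2 1 r\<bar> \<le> ((sabs ts + 1) / (a1 - 1)) * F1'' (coord 1 r) *
            min 1 (min (F1' (fst r)) (min (F2' (snd r)) (sqrt (coord 1 r / coord 2 r))))"
      proof (cases "x > 0 \<and> y > 0")
        case True
        then have xy: "x > 0" "y > 0" by auto
        have Ha: "\<forall>(c,k1,k2,m)\<in>set ts. a1-2 \<le> k1 \<and> 0 \<le> k2 \<and> k1 - (a1-2) + (k2 - (0)) \<le> \<gamma> + m"
        unfolding tsv hsd using b1 b2 mina a1 a2 g by auto
        have Hb: "\<forall>(c,k1,k2,m)\<in>set ts. 2*a1-3 \<le> k1 \<and> 0 \<le> k2 \<and> k1 - (2*a1-3) + (k2 - (0)) \<le> \<gamma> + m"
        unfolding tsv hsd using b1 b2 mina a1 a2 g by auto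
        have Hc: "\<forall>(c,k1,k2,m)\<in>set ts. a1-2 \<le> k1 \<and> a2-1 \<le> k2 \<and> k1 - (a1-2) + (k2 - (a2-1)) \<le> \<gamma> + m"
        unfolding tsv hsd using b1 b2 mina a1 a2 g by auto
        have Hd: "\<forall>(c,k1,k2,m)\<in>set ts. a1-2+1/2 \<le> k1 \<and> -1/2 \<le> k2 \<and> k1 - (a1-2+1/2) + (k2 - (-1/2)) \<le> \<gamma> + m"
        unfolding tsv hsd using b1 b2 mina a1 a2 g by auto
        have Pa: "x powr (a1-2) * y powr 0 = x powr (a1-2) * 1" using xy by simp
        have Pb: "x powr (2*a1-3) * y powr 0 = x powr (a1-2) * x powr (a1-1)" using xy by (simp add: powr_add[symmetric])
        have Pc: "x powr (a1-2) * y powr (a2-1) = x powr (a1-2) * y powr (a2-1)" by simp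
        have Pd: "x powr (a1-2+1/2) * y powr (-1/2) = x powr (a1-2) * sqrt (x / y)" unfolding powr_add sqrt_div_powr[OF xy] by (simp only: mult_ac)
        have Fpp: "F1'' x = (a1 - 1) * (x powr (a1-2))" using xy by (simp add: F1''_def rpow_pos)
        have "\<bar>Tsum \<gamma> ts (x, y)\<bar> \<le> ((sabs ts + 1) / (a1 - 1)) * F1'' x * min 1 (min (x powr (a1-1)) (min (y powr (a2-1)) (sqrt (x / y))))"
          by (rule bound_full[OF xy a1 _ Ha Hb Hc Hd Pa Pb Pc Pd M Fpp]) simp
        then show ?thesis by (simp add: D2h_def ts_def rxy coord_def F1'_def F2'_def)
      next
        case False
        then have "x = 0 \<or> y = 0" using xy0 by auto
        then have z: "D2h 2 1 r = 0" by (auto simp: D2h_def rxy Tsum_zero1 Tsum_zero2)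
        have "F1'' (coord 1 r) \<ge> 0" using xy0 a1 by (simp add: F1''_def rxy coord_def rpow_nonneg)
        moreover have "min 1 (min (F1' (fst r)) (min (F2' (snd r)) (sqrt (coord 1 r / coord 2 r)))) \<ge> 0"
          using xy0 by (simp add: F1'_def F2'_def rxy coord_def)
        ultimately show ?thesis using z K by (intro zero_rhs) auto
      qed
    qed
    then show ?thesis using K by (intro exI[of _ "(sabs ts + 1) / (a1 - 1)"]) simp
  qed
  have B22: "\<exists>\<kappa>>0. \<forall>r\<in>Qd. \<bar>D2h 2 2 r\<bar> \<le> \<kappa> * (if (2::nat) = 1 then F1'' else F2'') (coord 2 r) *
            min 1 (min (F1' (fst r)) (min (F2' (snd r)) (sqrt (coord 2 r / coord 2 r))))"
  proof -
    define ts where "ts = dd 2 (dd 2 hs)"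
    have tsv: "ts = d2 \<gamma> (d2 \<gamma> hs)" by (simp add: ts_def dd_def)
    have K: "(sabs ts + 1) / (a2 - 1) > 0" using sabs_nonneg[of ts] a2 by (simp add: add_nonneg_pos)
    have "\<forall>r\<in>Qd. \<bar>D2h 2 2 r\<bar> \<le> ((sabs ts + 1) / (a2 - 1)) * F2'' (coord 2 r) *
            min 1 (min (F1' (fst r)) (min (F2' (snd r)) (sqrt (coord 2 r / coord 2 r))))"
    proof
      fix r assume r: "r \<in> Qd"
      obtain x y where rxy: "r = (x, y)" by (cases r)
      have xy0: "x \<ge> 0" "y \<ge> 0" using r rxy by (auto simp: Qd_def)
      have M: "min 1 (min (x powr (a1-1)) (min (y powr (a2-1)) (sqrt (y / y)))) \<ge> 0"
        using xy0 by simp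
      show "\<bar>D2h 2 2 r\<bar> \<le> ((sabs ts + 1) / (a2 - 1)) * F2'' (coord 2 r) *
            min 1 (min (F1' (fst r)) (min (F2' (snd r)) (sqrt (coord 2 r / coord 2 r))))"
      proof (cases "x > 0 \<and> y > 0")
        case True
        then have xy: "x > 0" "y > 0" by auto
        have Ha: "\<forall>(c,k1,k2,m)\<in>set ts. 0 \<le> k1 \<and> a2-2 \<le> k2 \<and> k1 - (0) + (k2 - (a2-2)) \<le> \<gamma> + m"
        unfolding tsv hsd using b1 b2 mina a1 a2 g by auto
        have Hb: "\<forall>(c,k1,k2,m)\<in>set ts. a1-1 \<le> k1 \<and> a2-2 \<le> k2 \<and> k1 - (a1-1) + (k2 - (a2-2)) \<le> \<gamma> + m"
        unfolding tsv hsd using b1 b2 mina a1 a2 g by auto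
        have Hc: "\<forall>(c,k1,k2,m)\<in>set ts. 0 \<le> k1 \<and> 2*a2-3 \<le> k2 \<and> k1 - (0) + (k2 - (2*a2-3)) \<le> \<gamma> + m"
        unfolding tsv hsd using b1 b2 mina a1 a2 g by auto
        have Hd: "\<forall>(c,k1,k2,m)\<in>set ts. 0 \<le> k1 \<and> a2-2 \<le> k2 \<and> k1 - (0) + (k2 - (a2-2)) \<le> \<gamma> + m"
        unfolding tsv hsd using b1 b2 mina a1 a2 g by auto
        have Pa: "x powr 0 * y powr (a2-2) = y powr (a2-2) * 1" using xy by simp
        have Pb: "x powr (a1-1) * y powr (a2-2) = y powr (a2-2) * x powr (a1-1)" by simp
        have Pc: "x powr 0 * y powr (2*a2-3) = y powr (a2-2) * y powr (a2-1)" using xy by (simp add: powr_add[symmetric])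
        have Pd: "x powr 0 * y powr (a2-2) = y powr (a2-2) * sqrt (y / y)" using xy by simp
        have Fpp: "F2'' y = (a2 - 1) * (y powr (a2-2))" using xy by (simp add: F2''_def rpow_pos)
        have "\<bar>Tsum \<gamma> ts (x, y)\<bar> \<le> ((sabs ts + 1) / (a2 - 1)) * F2'' y * min 1 (min (x powr (a1-1)) (min (y powr (a2-1)) (sqrt (y / y))))"
          by (rule bound_full[OF xy a2 _ Ha Hb Hc Hd Pa Pb Pc Pd M Fpp]) simp
        then show ?thesis by (simp add: D2h_def ts_def rxy coord_def F1'_def F2'_def)
      next
        case False
        then have "x = 0 \<or> y = 0" using xy0 by auto
        then have z: "D2h 2 2 r = 0" by (auto simp: D2h_def rxy Tsum_zero1 Tsum_zero2)
        have "F2'' (coord 2 r) \<ge> 0" using xy0 a2 by (simp add: F2''_def rxy coord_def rpow_nonneg)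
        moreover have "min 1 (min (F1' (fst r)) (min (F2' (snd r)) (sqrt (coord 2 r / coord 2 r)))) \<ge> 0"
          using xy0 by (simp add: F1'_def F2'_def rxy coord_def)
        ultimately show ?thesis using z K by (intro zero_rhs) auto
      qed
    qed
    then show ?thesis using K by (intro exI[of _ "(sabs ts + 1) / (a2 - 1)"]) simp
  qed
  have "cond_theta F1' F1'' F2' F2'' Dh D2h"
    unfolding cond_theta_def using A B11 B12 B21 B22 by simp
  show ?thesis
    unfolding all_conditions_def
    apply (rule exI[of _ F1'], rule exI[of _ F1''], rule exI[of _ F2'], rule exI[of _ F2''], rule exI[of _ Dh], rule exI[of _ D2h])
    using F_good[OF a1] F_good[OF a2] condh \<open>cond_theta F1' F1'' F2' F2'' Dh D2h\<close>
    unfolding F1'_def F2'_def F1''_def F2''_def h_def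
    by (auto intro!: exI[of _ 1])
qed



lemma cmp:
  fixes f g f' g' :: "real \<Rightarrow> real"
  assumes X: "X \<ge> 0" and cf: "continuous_on {0..X} f" and cg: "continuous_on {0..X} g"
    and df: "\<And>t. 0 < t \<Longrightarrow> t < X \<Longrightarrow> (f has_real_derivative f' t) (at t)"
    and dg: "\<And>t. 0 < t \<Longrightarrow> t < X \<Longrightarrow> (g has_real_derivative g' t) (at t)"
    and f0: "f 0 = 0" and g0: "g 0 = 0"
    and bd: "\<And>t. 0 < t \<Longrightarrow> t < X \<Longrightarrow> \<bar>f' t\<bar> \<le> g' t"
  shows "\<bar>f X\<bar> \<le> g X"
proof -
  have 1: "(\<lambda>t. g t - f t) 0 \<le> (\<lambda>t. g t - f t) X"
  proof (rule DERIV_nonneg_imp_increasing_open[OF X])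
    fix t assume t: "0 < t" "t < X"
    show "\<exists>y. ((\<lambda>t. g t - f t) has_real_derivative y) (at t) \<and> 0 \<le> y"
      using DERIV_diff[OF dg[OF t] df[OF t]] bd[OF t] by (intro exI[of _ "g' t - f' t"]) auto
  qed (intro continuous_intros cf cg)
  have 2: "(\<lambda>t. g t + f t) 0 \<le> (\<lambda>t. g t + f t) X"
  proof (rule DERIV_nonneg_imp_increasing_open[OF X])
    fix t assume t: "0 < t" "t < X"
    show "\<exists>y. ((\<lambda>t. g t + f t) has_real_derivative y) (at t) \<and> 0 \<le> y"
      using DERIV_add[OF dg[OF t] df[OF t]] bd[OF t] by (intro exI[of _ "g' t + f' t"]) auto
  qed (intro continuous_intros cf cg)
  show ?thesis using 1 2 f0 g0 by auto
qed

lemma twice: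
  fixes H D E G G1 G2 :: "real \<Rightarrow> real"
  assumes X: "X > 0"
    and cH: "continuous_on {0..X} H" and dH: "\<And>t. 0 < t \<Longrightarrow> t < X \<Longrightarrow> (H has_real_derivative D t) (at t)"
    and cD: "continuous_on {0..X} D" and dD: "\<And>t. 0 < t \<Longrightarrow> t < X \<Longrightarrow> (D has_real_derivative E t) (at t)"
    and H0: "H 0 = 0" and D0: "D 0 = 0"
    and cG: "continuous_on {0..X} G" and dG: "\<And>t. 0 < t \<Longrightarrow> t < X \<Longrightarrow> (G has_real_derivative G1 t) (at t)"
    and cG1: "continuous_on {0..X} G1" and dG1: "\<And>t. 0 < t \<Longrightarrow> t < X \<Longrightarrow> (G1 has_real_derivative G2 t) (at t)"
    and G0: "G 0 = 0" and G10: "G1 0 = 0"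
    and bd: "\<And>t. 0 < t \<Longrightarrow> t < X \<Longrightarrow> \<bar>E t\<bar> \<le> G2 t"
  shows "\<bar>H X\<bar> \<le> G X"
proof (rule cmp[OF _ cH cG dH dG H0 G0])
  show "0 \<le> X" using X by simp
  fix t assume t: "0 < t" "t < X"
  show "\<bar>D t\<bar> \<le> G1 t"
  proof (rule cmp[of t D G1 E G2])
    show "continuous_on {0..t} D" using cD by (rule continuous_on_subset) (use t in auto)
    show "continuous_on {0..t} G1" using cG1 by (rule continuous_on_subset) (use t in auto)
  qed (use t dD dG1 D0 G10 bd in auto)
qed

lemma Fline:
  assumes "cond_F F F' F''"
  shows "continuous_on {0..} F" "continuous_on {0..} F'"
    "\<And>t. t > 0 \<Longrightarrow> (F has_real_derivative F' t) (at t)"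
    "\<And>t. t > 0 \<Longrightarrow> (F' has_real_derivative F'' t) (at t)"
proof -
  have d: "\<forall>r\<ge>0. (F has_real_derivative F' r) (at r within {0..}) \<and> (F' has_real_derivative F'' r) (at r within {0..})"
    using assms by (simp add: cond_F_def C2_nonneg_def)
  show "continuous_on {0..} F"
    unfolding continuous_on_eq_continuous_within
    using d by (auto intro: DERIV_continuous)
  show "continuous_on {0..} F'"
    unfolding continuous_on_eq_continuous_within
    using d by (auto intro: DERIV_continuous)
  fix t :: real assume t: "t > 0"
  have "at t within {0..} = at t" using t by (intro at_within_interior) auto
  moreover have "(F has_real_derivative F' t) (at t within {0..})" "(F' has_real_derivative F'' t) (at t within {0..})"
    using d t by auto
  ultimately show "(F has_real_derivative F' t) (at t)" "(F' has_real_derivative F'' t) (at t)"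
    by auto
qed

lemma hcont:
  assumes "C2_quadrant h Dh D2h"
  shows "continuous_on Qd h" "continuous_on Qd (Dh 1)" "continuous_on Qd (Dh 2)"
proof -
  have d: "\<forall>p\<in>Qd. (h has_derivative (\<lambda>v. fst v * Dh 1 p + snd v * Dh 2 p)) (at p within Qd) \<and>
        (\<forall>j\<in>{1,2}. (Dh j has_derivative (\<lambda>v. fst v * D2h j 1 p + snd v * D2h j 2 p)) (at p within Qd))"
    using assms by (simp add: C2_quadrant_def)
  show "continuous_on Qd h" "continuous_on Qd (Dh 1)" "continuous_on Qd (Dh 2)"
    unfolding continuous_on_eq_continuous_within
    using d by (auto intro: has_derivative_continuous)
qed

lemma line1:
  assumes C: "C2_quadrant h Dh D2h" and y: "y \<ge> 0" and X: "X \<ge> 0"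
  shows "continuous_on {0..X} (\<lambda>t. h (t, y))" "continuous_on {0..X} (\<lambda>t. Dh 1 (t, y))"
    "\<And>t. 0 < t \<Longrightarrow> ((\<lambda>t. h (t, y)) has_real_derivative Dh 1 (t, y)) (at t)"
    "\<And>t. 0 < t \<Longrightarrow> ((\<lambda>t. Dh 1 (t, y)) has_real_derivative D2h 1 1 (t, y)) (at t)"
proof -
  have img: "(\<lambda>t. (t, y)) ` {0..X} \<subseteq> Qd" using y by (auto simp: Qd_def)
  have ci: "continuous_on {0..X} (\<lambda>t::real. (t, y))" by (intro continuous_intros)
  show "continuous_on {0..X} (\<lambda>t. h (t, y))"
    using continuous_on_compose[OF ci continuous_on_subset[OF hcont(1)[OF C] img]] by (simp add: o_def)
  show "continuous_on {0..X} (\<lambda>t. Dh 1 (t, y))"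
    using continuous_on_compose[OF ci continuous_on_subset[OF hcont(2)[OF C] img]] by (simp add: o_def)
  have d: "\<forall>p\<in>Qd. (h has_derivative (\<lambda>v. fst v * Dh 1 p + snd v * Dh 2 p)) (at p within Qd) \<and>
        (\<forall>j\<in>{1,2}. (Dh j has_derivative (\<lambda>v. fst v * D2h j 1 p + snd v * D2h j 2 p)) (at p within Qd))"
    using C by (simp add: C2_quadrant_def)
  fix t :: real assume t: "0 < t"
  have p: "(t, y) \<in> Qd" using t y by (auto simp: Qd_def)
  have at: "at t within {0..} = at t" using t by (intro at_within_interior) auto
  show "((\<lambda>t. h (t, y)) has_real_derivative Dh 1 (t, y)) (at t)"
    using partial1[of h "Dh 1 (t,y)" "Dh 2 (t,y)" t y] d p t y at by auto
  show "((\<lambda>t. Dh 1 (t, y)) has_real_derivative D2h 1 1 (t, y)) (at t)"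
    using partial1[of "Dh 1" "D2h 1 1 (t,y)" "D2h 1 2 (t,y)" t y] d p t y at by auto
qed

lemma line2:
  assumes C: "C2_quadrant h Dh D2h" and x: "x \<ge> 0" and X: "X \<ge> 0"
  shows "continuous_on {0..X} (\<lambda>t. h (x, t))" "continuous_on {0..X} (\<lambda>t. Dh 2 (x, t))"
    "\<And>t. 0 < t \<Longrightarrow> ((\<lambda>t. h (x, t)) has_real_derivative Dh 2 (x, t)) (at t)"
    "\<And>t. 0 < t \<Longrightarrow> ((\<lambda>t. Dh 2 (x, t)) has_real_derivative D2h 2 2 (x, t)) (at t)"
proof -
  have img: "(\<lambda>t. (x, t)) ` {0..X} \<subseteq> Qd" using x by (auto simp: Qd_def)
  have ci: "continuous_on {0..X} (\<lambda>t::real. (x, t))" by (intro continuous_intros)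
  show "continuous_on {0..X} (\<lambda>t. h (x, t))"
    using continuous_on_compose[OF ci continuous_on_subset[OF hcont(1)[OF C] img]] by (simp add: o_def)
  show "continuous_on {0..X} (\<lambda>t. Dh 2 (x, t))"
    using continuous_on_compose[OF ci continuous_on_subset[OF hcont(3)[OF C] img]] by (simp add: o_def)
  have d: "\<forall>p\<in>Qd. (h has_derivative (\<lambda>v. fst v * Dh 1 p + snd v * Dh 2 p)) (at p within Qd) \<and>
        (\<forall>j\<in>{1,2}. (Dh j has_derivative (\<lambda>v. fst v * D2h j 1 p + snd v * D2h j 2 p)) (at p within Qd))"
    using C by (simp add: C2_quadrant_def)
  fix t :: real assume t: "0 < t"
  have p: "(x, t) \<in> Qd" using t x by (auto simp: Qd_def)
  have at: "at t within {0..} = at t" using t by (intro at_within_interior) auto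
  show "((\<lambda>t. h (x, t)) has_real_derivative Dh 2 (x, t)) (at t)"
    using partial2[of h "Dh 1 (x,t)" "Dh 2 (x,t)" x t] d p t x at by auto
  show "((\<lambda>t. Dh 2 (x, t)) has_real_derivative D2h 2 2 (x, t)) (at t)"
    using partial2[of "Dh 2" "D2h 2 1 (x,t)" "D2h 2 2 (x,t)" x t] d p t x at by auto
qed

lemma powr_neg_unbounded:
  fixes e C \<delta> :: real
  assumes e: "e < 0" and d: "\<delta> > 0"
  shows "\<exists>r. 0 < r \<and> r \<le> \<delta> \<and> r powr e > C"
proof -
  define r where "r = min \<delta> ((\<bar>C\<bar> + 1) powr (1/e))"
  have r0: "r > 0" using d by (simp add: r_def)
  have "r powr e \<ge> ((\<bar>C\<bar> + 1) powr (1/e)) powr e"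
    using e r0 by (intro powr_mono2') (auto simp: r_def)
  also have "((\<bar>C\<bar> + 1) powr (1/e)) powr e = \<bar>C\<bar> + 1" using e by (simp add: powr_powr)
  finally have "r powr e > C" by linarith
  then show ?thesis using r0 by (intro exI[of _ r]) (auto simp: r_def)
qed

lemma powr_pos_unbounded:
  fixes e C :: real
  assumes e: "e > 0"
  shows "\<exists>s. s \<ge> 1 \<and> s powr e > C"
proof -
  define s where "s = max 1 ((\<bar>C\<bar> + 1) powr (1/e))"
  have s1: "s \<ge> 1" by (simp add: s_def)
  have "s powr e \<ge> ((\<bar>C\<bar> + 1) powr (1/e)) powr e"
    using e s1 by (intro powr_mono2) (auto simp: s_def)
  also have "((\<bar>C\<bar> + 1) powr (1/e)) powr e = \<bar>C\<bar> + 1" using e by (simp add: powr_powr)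
  finally have "s powr e > C" by linarith
  then show ?thesis using s1 by blast
qed



lemma F_necessary:
  fixes a r0 :: real
  assumes a: "a > 0" and cF: "cond_F (\<lambda>r. r powr a / a) F' F''" and n: "near0_F F'' r0" and r0: "r0 > 0"
  shows "a \<ge> 2" "\<And>t. t > 0 \<Longrightarrow> F' t = t powr (a-1)" "\<And>t. t > 0 \<Longrightarrow> F'' t = (a-1) * t powr (a-2)"
proof -
  have F'eq: "F' t = t powr (a-1)" if t: "t > 0" for t
  proof -
    have "((\<lambda>r. r powr a / a) has_real_derivative a * t powr (a-1) / a) (at t)"
      using has_real_derivative_powr[OF t, of a] by (rule DERIV_cdivide)
    moreover have "((\<lambda>r. r powr a / a) has_real_derivative F' t) (at t)" using Fline(3)[OF cF t] .
    ultimately show ?thesis using a by (metis DERIV_unique nonzero_mult_div_cancel_left less_irrefl)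
  qed
  then show "\<And>t. t > 0 \<Longrightarrow> F' t = t powr (a-1)" by blast
  have F''eq: "F'' t = (a-1) * t powr (a-2)" if t: "t > 0" for t
  proof -
    have "((\<lambda>r. r powr (a-1)) has_real_derivative (a-1) * t powr (a-1-1)) (at t)"
      using has_real_derivative_powr[OF t, of "a-1"] .
    then have "(F' has_real_derivative (a-1) * t powr (a-1-1)) (at t)"
      by (rule has_field_derivative_transform_within_open[where S="{0<..}"]) (use t F'eq in auto)
    moreover have "(F' has_real_derivative F'' t) (at t)" using Fline(4)[OF cF t] .
    ultimately show ?thesis by (metis DERIV_unique diff_diff_eq one_add_one)
  qed
  then show "\<And>t. t > 0 \<Longrightarrow> F'' t = (a-1) * t powr (a-2)" by blast
  show "a \<ge> 2"
  proof (rule ccontr)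
    assume "\<not> a \<ge> 2"
    then have a2: "a < 2" by simp
    obtain m M \<beta> where mM: "m > 0" "M > 0" "\<beta> \<ge> 0"
      and bd: "\<And>r. 0 \<le> r \<Longrightarrow> r \<le> r0 \<Longrightarrow> m * rpow r \<beta> \<le> F'' r \<and> F'' r \<le> M * rpow r \<beta>"
      using n unfolding near0_F_def by blast
    have Fpos: "F'' r > 0" if "r > 0" for r using cF that by (simp add: cond_F_def)
    have a1: "a > 1"
    proof -
      have "F'' (min r0 1) > 0" using Fpos r0 by simp
      then have "(a-1) * (min r0 1) powr (a-2) > 0" using F''eq r0 by simp
      then show ?thesis using r0 by (simp add: zero_less_mult_iff)
    qed
    obtain r where r: "0 < r" "r \<le> min r0 1" "r powr (a-2) > M / (a-1)"
      using powr_neg_unbounded[of "a-2" "min r0 1" "M / (a-1)"] a2 r0 by auto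
    have "F'' r \<le> M * rpow r \<beta>" using bd[of r] r by auto
    also have "\<dots> = M * r powr \<beta>" using r by (simp add: rpow_pos)
    also have "\<dots> \<le> M * 1" using r mM by (intro mult_left_mono powr_le1) auto
    finally have "F'' r \<le> M" by simp
    moreover have "F'' r > M"
    proof -
      have "(a-1) * r powr (a-2) > (a-1) * (M / (a-1))" using r a1 by (intro mult_strict_left_mono) auto
      then show ?thesis using F''eq[OF r(1)] a1 by simp
    qed
    ultimately show False by simp
  qed
qed

lemma twiceA:
  fixes H D E F' F'' :: "real \<Rightarrow> real"
  assumes a: "a \<ge> 2" and cF: "cond_F (\<lambda>r. r powr a / a) F' F''" and k: "\<kappa> > 0" and X: "X > 0"
    and F'eq: "\<And>t. t > 0 \<Longrightarrow> F' t = t powr (a-1)"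
    and cH: "continuous_on {0..X} H" and dH: "\<And>t. 0 < t \<Longrightarrow> t < X \<Longrightarrow> (H has_real_derivative D t) (at t)"
    and cD: "continuous_on {0..X} D" and dD: "\<And>t. 0 < t \<Longrightarrow> t < X \<Longrightarrow> (D has_real_derivative E t) (at t)"
    and H0: "H 0 = 0" and D0: "D 0 = 0"
    and bd: "\<And>t. 0 < t \<Longrightarrow> t < X \<Longrightarrow> \<bar>E t\<bar> \<le> \<kappa> * (F' t * F'' t)"
  shows "\<bar>H X\<bar> \<le> \<kappa> / 2 / (2*a-1) * X powr (2*a-1)"
proof (rule twice[OF X cH dH cD dD H0 D0])
  show "continuous_on {0..X} (\<lambda>t. \<kappa> / 2 / (2*a-1) * t powr (2*a-1))"
    by (intro continuous_intros continuous_on_powr') (use a in auto)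
  show "continuous_on {0..X} (\<lambda>t. \<kappa> / 2 * (F' t)\<^sup>2)"
    using continuous_on_subset[OF Fline(2)[OF cF], of "{0..X}"] by (auto intro!: continuous_intros)
  fix t assume t: "0 < t" "t < X"
  have "((\<lambda>t. \<kappa> / 2 / (2*a-1) * t powr (2*a-1)) has_real_derivative \<kappa> / 2 / (2*a-1) * ((2*a-1) * t powr (2*a-1-1))) (at t)"
    using has_real_derivative_powr[OF t(1), of "2*a-1"] by (rule DERIV_cmult)
  moreover have "\<kappa> / 2 / (2*a-1) * ((2*a-1) * t powr (2*a-1-1)) = \<kappa> / 2 * (F' t)\<^sup>2"
  proof -
    have "(F' t)\<^sup>2 = t powr (2*a-2)" using F'eq[OF t(1)] t by (simp add: power2_eq_square powr_add[symmetric])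
    moreover have "2*a-1-1 = 2*a-2" by simp
    moreover have "k / c * (c * P) = k * P" if "c \<noteq> 0" for k c P :: real
      using that by simp
    moreover have "2*a-1 \<noteq> 0" using a by simp
    ultimately show ?thesis by metis
  qed
  ultimately show "((\<lambda>t. \<kappa> / 2 / (2*a-1) * t powr (2*a-1)) has_real_derivative \<kappa> / 2 * (F' t)\<^sup>2) (at t)" by (rule DERIV_cong)
  have "((\<lambda>t. \<kappa> / 2 * (F' t * F' t)) has_real_derivative \<kappa> / 2 * (F'' t * F' t + F'' t * F' t)) (at t)"
    using Fline(4)[OF cF t(1)] by (intro DERIV_cmult DERIV_mult)
  then show "((\<lambda>t. \<kappa> / 2 * (F' t)\<^sup>2) has_real_derivative \<kappa> * (F' t * F'' t)) (at t)"
    by (simp add: power2_eq_square algebra_simps)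
  show "\<bar>E t\<bar> \<le> \<kappa> * (F' t * F'' t)" using bd[OF t] .
next
  show "\<kappa> / 2 / (2*a-1) * 0 powr (2*a-1) = 0" by simp
  have "F' 0 = 0" using cF by (simp add: cond_F_def)
  then show "\<kappa> / 2 * (F' 0)\<^sup>2 = 0" by simp
qed

lemma twiceB:
  fixes H D E F' F'' :: "real \<Rightarrow> real"
  assumes a: "a > 0" and cF: "cond_F (\<lambda>r. r powr a / a) F' F''" and X: "X > 0"
    and cH: "continuous_on {0..X} H" and dH: "\<And>t. 0 < t \<Longrightarrow> t < X \<Longrightarrow> (H has_real_derivative D t) (at t)"
    and cD: "continuous_on {0..X} D" and dD: "\<And>t. 0 < t \<Longrightarrow> t < X \<Longrightarrow> (D has_real_derivative E t) (at t)"
    and H0: "H 0 = 0" and D0: "D 0 = 0"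
    and bd: "\<And>t. 0 < t \<Longrightarrow> t < X \<Longrightarrow> \<bar>E t\<bar> \<le> \<kappa> * F'' t"
  shows "\<bar>H X\<bar> \<le> \<kappa> * (X powr a / a)"
proof (rule twice[OF X cH dH cD dD H0 D0])
  show "continuous_on {0..X} (\<lambda>t. \<kappa> * (t powr a / a))"
    by (intro continuous_on_mult_left continuous_on_subset[OF Fline(1)[OF cF]]) auto
  show "continuous_on {0..X} (\<lambda>t. \<kappa> * F' t)"
    by (intro continuous_on_mult_left continuous_on_subset[OF Fline(2)[OF cF]]) auto
  fix t assume t: "0 < t" "t < X"
  show "((\<lambda>t. \<kappa> * (t powr a / a)) has_real_derivative \<kappa> * F' t) (at t)"
    using Fline(3)[OF cF t(1)] by (rule DERIV_cmult)
  show "((\<lambda>t. \<kappa> * F' t) has_real_derivative \<kappa> * F'' t) (at t)"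
    using Fline(4)[OF cF t(1)] by (rule DERIV_cmult)
  show "\<bar>E t\<bar> \<le> \<kappa> * F'' t" using bd[OF t] .
next
  show "\<kappa> * (0 powr a / a) = 0" by simp
  have "F' 0 = 0" using cF by (simp add: cond_F_def)
  then show "\<kappa> * F' 0 = 0" by simp
qed



lemma necessity:
  fixes a1 a2 b1 b2 \<gamma> :: real
  assumes pos: "a1 > 0" "a2 > 0" "b1 > 0" "b2 > 0" "\<gamma> > 0"
    and AC: "all_conditions (\<lambda>r. r powr a1 / a1) (\<lambda>r. r powr a2 / a2)
            (\<lambda>(r1, r2). r1 powr b1 * r2 powr b2 / (1 + r1 + r2) powr \<gamma>)"
  shows "a1 \<ge> 2 \<and> a2 \<ge> 2 \<and> b1 \<ge> 2 * a1 - 1 \<and> b2 \<ge> 2 * a2 - 1 \<and> b1 + b2 \<le> \<gamma> + min a1 a2"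
proof -
  define h where "h = (\<lambda>(r1::real, r2::real). r1 powr b1 * r2 powr b2 / (1 + r1 + r2) powr \<gamma>)"
  obtain F1' F1'' F2' F2'' Dh D2h where
    cF1: "cond_F (\<lambda>r. r powr a1 / a1) F1' F1''" and cF2: "cond_F (\<lambda>r. r powr a2 / a2) F2' F2''"
    and n0: "\<exists>r0>0. near0_F F1'' r0 \<and> near0_F F2'' r0"
    and ch: "cond_h h Dh D2h" and ct: "cond_theta F1' F1'' F2' F2'' Dh D2h"
    using AC unfolding all_conditions_def h_def by blast
  obtain r0 where r0: "r0 > 0" "near0_F F1'' r0" "near0_F F2'' r0" using n0 by blast
  have A1: "a1 \<ge> 2" and F1'eq: "\<And>t. t > 0 \<Longrightarrow> F1' t = t powr (a1-1)"
    and F1''eq: "\<And>t. t > 0 \<Longrightarrow> F1'' t = (a1-1) * t powr (a1-2)"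
    using F_necessary[OF pos(1) cF1 r0(2) r0(1)] by auto
  have A2: "a2 \<ge> 2" and F2'eq: "\<And>t. t > 0 \<Longrightarrow> F2' t = t powr (a2-1)"
    and F2''eq: "\<And>t. t > 0 \<Longrightarrow> F2'' t = (a2-1) * t powr (a2-2)"
    using F_necessary[OF pos(2) cF2 r0(3) r0(1)] by auto
  have F1pos: "F1'' t > 0" "F1' t \<ge> 0" if "t > 0" for t using F1''eq[OF that] F1'eq[OF that] A1 that by auto
  have F2pos: "F2'' t > 0" "F2' t \<ge> 0" if "t > 0" for t using F2''eq[OF that] F2'eq[OF that] A2 that by auto
  have C2: "C2_quadrant h Dh D2h" using ch by (simp add: cond_h_def)
  have Dh0: "Dh 1 (0, r) = 0" "Dh 2 (r, 0) = 0" if "r \<ge> 0" for r using ch that by (auto simp: cond_h_def)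
  obtain k1 where k1: "k1 > 0" and kb1: "\<forall>r\<in>Qd. \<bar>D2h 1 1 r\<bar> \<le> k1 * F1'' (fst r) *
      min 1 (min (F1' (fst r)) (min (F2' (snd r)) (sqrt (fst r / fst r))))"
    using ct unfolding cond_theta_def by (auto simp: coord_def)
  obtain k2 where k2: "k2 > 0" and kb2: "\<forall>r\<in>Qd. \<bar>D2h 2 2 r\<bar> \<le> k2 * F2'' (snd r) *
      min 1 (min (F1' (fst r)) (min (F2' (snd r)) (sqrt (snd r / snd r))))"
    using ct unfolding cond_theta_def by (auto simp: coord_def)
  have hval: "h (x, y) = x powr b1 * y powr b2 / (1 + x + y) powr \<gamma>" for x y by (simp add: h_def)
  have B1: "b1 \<ge> 2 * a1 - 1"
  proof (rule ccontr)
    assume "\<not> ?thesis"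
    then have e: "b1 - (2*a1 - 1) < 0" by simp
    define K where "K = k1 / 2 / (2*a1-1)"
    have K: "K > 0" using k1 A1 by (simp add: K_def)
    obtain X where X: "0 < X" "X \<le> 1/2" "X powr (b1 - (2*a1-1)) > 3 powr \<gamma> * K"
      using powr_neg_unbounded[OF e, of "1/2" "3 powr \<gamma> * K"] by auto
    have "\<bar>h (X, 1)\<bar> \<le> K * X powr (2*a1-1)" unfolding K_def
    proof (rule twiceA[OF A1 cF1 k1 X(1) F1'eq, where H="\<lambda>t. h (t, 1)" and D="\<lambda>t. Dh 1 (t, 1)" and E="\<lambda>t. D2h 1 1 (t, 1)"])
      show "continuous_on {0..X} (\<lambda>t. h (t, 1))" "continuous_on {0..X} (\<lambda>t. Dh 1 (t, 1))"
        using line1[OF C2, of 1 X] X by auto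
      fix t assume t: "0 < t" "t < X"
      show "((\<lambda>t. h (t, 1)) has_real_derivative Dh 1 (t, 1)) (at t)"
        "((\<lambda>t. Dh 1 (t, 1)) has_real_derivative D2h 1 1 (t, 1)) (at t)"
        using line1[OF C2, of 1 X] X t by auto
      have r: "(t, 1) \<in> Qd" using t by (simp add: Qd_def)
      have "\<bar>D2h 1 1 (t,1)\<bar> \<le> k1 * F1'' t * min 1 (min (F1' t) (min (F2' 1) (sqrt (t / t))))"
        using kb1 r by auto
      also have "\<dots> \<le> k1 * F1'' t * F1' t"
        using k1 F1pos[OF t(1)] by (intro mult_left_mono) auto
      finally show "\<bar>D2h 1 1 (t,1)\<bar> \<le> k1 * (F1' t * F1'' t)" by (simp add: ac_simps)
    qed (use Dh0(1)[of 1] in \<open>auto simp: hval\<close>)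
    moreover have "h (X, 1) > K * X powr (2*a1-1)"
    proof -
      have "X powr b1 = X powr (b1 - (2*a1-1)) * X powr (2*a1-1)" using X by (simp add: powr_add[symmetric])
      also have "\<dots> > (3 powr \<gamma> * K) * X powr (2*a1-1)" using X by (intro mult_strict_right_mono) auto
      finally have 1: "X powr b1 > 3 powr \<gamma> * K * X powr (2*a1-1)" .
      have 2: "(2 + X) powr \<gamma> \<le> 3 powr \<gamma>" using X pos by (intro powr_mono2) auto
      have 3: "(2 + X) powr \<gamma> > 0" using X by simp
      have "h (X, 1) = X powr b1 / (2 + X) powr \<gamma>" by (simp add: hval add_ac)
      also have "\<dots> \<ge> X powr b1 / 3 powr \<gamma>" using 2 3 X by (intro divide_left_mono) auto
      finally have "h (X, 1) \<ge> X powr b1 / 3 powr \<gamma>" .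
      moreover have "X powr b1 / 3 powr \<gamma> > K * X powr (2*a1-1)"
        using 1 by (simp add: field_simps)
      ultimately show ?thesis by linarith
    qed
    ultimately show False by linarith
  qed
  have B2: "b2 \<ge> 2 * a2 - 1"
  proof (rule ccontr)
    assume "\<not> ?thesis"
    then have e: "b2 - (2*a2 - 1) < 0" by simp
    define K where "K = k2 / 2 / (2*a2-1)"
    have K: "K > 0" using k2 A2 by (simp add: K_def)
    obtain X where X: "0 < X" "X \<le> 1/2" "X powr (b2 - (2*a2-1)) > 3 powr \<gamma> * K"
      using powr_neg_unbounded[OF e, of "1/2" "3 powr \<gamma> * K"] by auto
    have "\<bar>h (1, X)\<bar> \<le> K * X powr (2*a2-1)" unfolding K_def
    proof (rule twiceA[OF A2 cF2 k2 X(1) F2'eq, where H="\<lambda>t. h (1, t)" and D="\<lambda>t. Dh 2 (1, t)" and E="\<lambda>t. D2h 2 2 (1, t)"])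
      show "continuous_on {0..X} (\<lambda>t. h (1, t))" "continuous_on {0..X} (\<lambda>t. Dh 2 (1, t))"
        using line2[OF C2, of 1 X] X by auto
      fix t assume t: "0 < t" "t < X"
      show "((\<lambda>t. h (1, t)) has_real_derivative Dh 2 (1, t)) (at t)"
        "((\<lambda>t. Dh 2 (1, t)) has_real_derivative D2h 2 2 (1, t)) (at t)"
        using line2[OF C2, of 1 X] X t by auto
      have r: "(1, t) \<in> Qd" using t by (simp add: Qd_def)
      have "\<bar>D2h 2 2 (1,t)\<bar> \<le> k2 * F2'' t * min 1 (min (F1' 1) (min (F2' t) (sqrt (t / t))))"
        using kb2 r by auto
      also have "\<dots> \<le> k2 * F2'' t * F2' t"
        using k2 F2pos[OF t(1)] by (intro mult_left_mono) auto
      finally show "\<bar>D2h 2 2 (1,t)\<bar> \<le> k2 * (F2' t * F2'' t)" by (simp add: ac_simps)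
    qed (use Dh0(2)[of 1] in \<open>auto simp: hval\<close>)
    moreover have "h (1, X) > K * X powr (2*a2-1)"
    proof -
      have "X powr b2 = X powr (b2 - (2*a2-1)) * X powr (2*a2-1)" using X by (simp add: powr_add[symmetric])
      also have "\<dots> > (3 powr \<gamma> * K) * X powr (2*a2-1)" using X by (intro mult_strict_right_mono) auto
      finally have 1: "X powr b2 > 3 powr \<gamma> * K * X powr (2*a2-1)" .
      have 2: "(2 + X) powr \<gamma> \<le> 3 powr \<gamma>" using X pos by (intro powr_mono2) auto
      have 3: "(2 + X) powr \<gamma> > 0" using X by simp
      have "h (1, X) = X powr b2 / (2 + X) powr \<gamma>" by (simp add: hval add_ac)
      also have "\<dots> \<ge> X powr b2 / 3 powr \<gamma>" using 2 3 X by (intro divide_left_mono) auto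
      finally have "h (1, X) \<ge> X powr b2 / 3 powr \<gamma>" .
      moreover have "X powr b2 / 3 powr \<gamma> > K * X powr (2*a2-1)"
        using 1 by (simp add: field_simps)
      ultimately show ?thesis by linarith
    qed
    ultimately show False by linarith
  qed
  have big: "s powr b1 * s powr b2 / (1 + s + s) powr \<gamma> \<le> k * (s powr a / a) \<Longrightarrow> s \<ge> 1 \<Longrightarrow> a > 0 \<Longrightarrow> k > 0 \<Longrightarrow>
       s powr (b1 + b2 - \<gamma> - a) \<le> 3 powr \<gamma> * k / a" for s k a
  proof -
    assume H: "s powr b1 * s powr b2 / (1 + s + s) powr \<gamma> \<le> k * (s powr a / a)" and s: "s \<ge> 1" and a: "a > 0" and k: "k > 0"
    have "(1 + s + s) powr \<gamma> \<le> (3 * s) powr \<gamma>" using s pos by (intro powr_mono2) auto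
    also have "\<dots> = 3 powr \<gamma> * s powr \<gamma>" using s by (simp add: powr_mult)
    finally have den: "(1 + s + s) powr \<gamma> \<le> 3 powr \<gamma> * s powr \<gamma>" .
    have dpos: "(1 + s + s) powr \<gamma> > 0" using s by simp
    have "s powr (b1 + b2) / (3 powr \<gamma> * s powr \<gamma>) \<le> s powr (b1 + b2) / (1 + s + s) powr \<gamma>"
      using den dpos s by (intro divide_left_mono) (auto intro!: mult_pos_pos)
    also have "\<dots> \<le> k * (s powr a / a)" using H s by (simp add: powr_add)
    finally have "s powr (b1 + b2) / (3 powr \<gamma> * s powr \<gamma>) \<le> k * (s powr a / a)" .
    moreover have "s powr (b1 + b2) = s powr (b1 + b2 - \<gamma> - a) * s powr \<gamma> * s powr a"
      using s by (simp add: powr_add[symmetric])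
    ultimately have "s powr (b1 + b2 - \<gamma> - a) * s powr \<gamma> * s powr a / (3 powr \<gamma> * s powr \<gamma>) \<le> k * (s powr a / a)"
      by simp
    then have "s powr (b1 + b2 - \<gamma> - a) * s powr a / 3 powr \<gamma> \<le> k * s powr a / a"
      using s by (simp add: field_simps)
    then have "s powr (b1 + b2 - \<gamma> - a) * s powr a \<le> (3 powr \<gamma> * k / a) * s powr a"
      using a by (simp add: field_simps)
    moreover have "s powr a > 0" using s by simp
    ultimately show ?thesis by (rule mult_right_le_imp_le)
  qed
  have C1: "b1 + b2 \<le> \<gamma> + a1"
  proof (rule ccontr)
    assume "\<not> ?thesis"
    then have e: "b1 + b2 - \<gamma> - a1 > 0" by simp
    obtain s where s: "s \<ge> 1" "s powr (b1 + b2 - \<gamma> - a1) > 3 powr \<gamma> * k1 / a1"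
      using powr_pos_unbounded[OF e] by blast
    have "\<bar>h (s, s)\<bar> \<le> k1 * (s powr a1 / a1)"
    proof (rule twiceB[OF pos(1) cF1, where H="\<lambda>t. h (t, s)" and D="\<lambda>t. Dh 1 (t, s)" and E="\<lambda>t. D2h 1 1 (t, s)"])
      show "s > 0" using s by simp
      show "continuous_on {0..s} (\<lambda>t. h (t, s))" "continuous_on {0..s} (\<lambda>t. Dh 1 (t, s))"
        using line1[OF C2, of s s] s by auto
      fix t assume t: "0 < t" "t < s"
      show "((\<lambda>t. h (t, s)) has_real_derivative Dh 1 (t, s)) (at t)"
        "((\<lambda>t. Dh 1 (t, s)) has_real_derivative D2h 1 1 (t, s)) (at t)"
        using line1[OF C2, of s s] s t by auto
      have r: "(t, s) \<in> Qd" using t by (simp add: Qd_def)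
      have "\<bar>D2h 1 1 (t,s)\<bar> \<le> k1 * F1'' t * min 1 (min (F1' t) (min (F2' s) (sqrt (t / t))))"
        using kb1 r by auto
      also have "\<dots> \<le> k1 * F1'' t * 1"
        using k1 F1pos[OF t(1)] by (intro mult_left_mono) auto
      finally show "\<bar>D2h 1 1 (t,s)\<bar> \<le> k1 * F1'' t" by simp
    qed (use s Dh0(1)[of s] in \<open>auto simp: hval\<close>)
    then have "h (s, s) \<le> k1 * (s powr a1 / a1)" by simp
    then have "s powr (b1 + b2 - \<gamma> - a1) \<le> 3 powr \<gamma> * k1 / a1"
      using big[of s k1 a1] s pos k1 by (simp add: hval)
    then show False using s by simp
  qed
  have C2': "b1 + b2 \<le> \<gamma> + a2"
  proof (rule ccontr)
    assume "\<not> ?thesis"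
    then have e: "b1 + b2 - \<gamma> - a2 > 0" by simp
    obtain s where s: "s \<ge> 1" "s powr (b1 + b2 - \<gamma> - a2) > 3 powr \<gamma> * k2 / a2"
      using powr_pos_unbounded[OF e] by blast
    have "\<bar>h (s, s)\<bar> \<le> k2 * (s powr a2 / a2)"
    proof (rule twiceB[OF pos(2) cF2, where H="\<lambda>t. h (s, t)" and D="\<lambda>t. Dh 2 (s, t)" and E="\<lambda>t. D2h 2 2 (s, t)"])
      show "s > 0" using s by simp
      show "continuous_on {0..s} (\<lambda>t. h (s, t))" "continuous_on {0..s} (\<lambda>t. Dh 2 (s, t))"
        using line2[OF C2, of s s] s by auto
      fix t assume t: "0 < t" "t < s"
      show "((\<lambda>t. h (s, t)) has_real_derivative Dh 2 (s, t)) (at t)"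
        "((\<lambda>t. Dh 2 (s, t)) has_real_derivative D2h 2 2 (s, t)) (at t)"
        using line2[OF C2, of s s] s t by auto
      have r: "(s, t) \<in> Qd" using t s by (simp add: Qd_def)
      have "\<bar>D2h 2 2 (s,t)\<bar> \<le> k2 * F2'' t * min 1 (min (F1' s) (min (F2' t) (sqrt (t / t))))"
        using kb2 r by auto
      also have "\<dots> \<le> k2 * F2'' t * 1"
        using k2 F2pos[OF t(1)] by (intro mult_left_mono) auto
      finally show "\<bar>D2h 2 2 (s,t)\<bar> \<le> k2 * F2'' t" by simp
    qed (use s Dh0(2)[of s] in \<open>auto simp: hval\<close>)
    then have "h (s, s) \<le> k2 * (s powr a2 / a2)" by simp
    then have "s powr (b1 + b2 - \<gamma> - a2) \<le> 3 powr \<gamma> * k2 / a2"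
      using big[of s k2 a2] s pos k2 by (simp add: hval)
    then show False using s by simp
  qed
  show ?thesis using A1 A2 B1 B2 C1 C2' by simp
qed


theorem propositionA1:
  fixes a1 a2 b1 b2 \<gamma> :: real
  assumes "a1 > 0" "a2 > 0" "b1 > 0" "b2 > 0" "\<gamma> > 0"
  shows "all_conditions (\<lambda>r. r powr a1 / a1) (\<lambda>r. r powr a2 / a2)
            (\<lambda>(r1, r2). r1 powr b1 * r2 powr b2 / (1 + r1 + r2) powr \<gamma>)
         \<longleftrightarrow> (a1 \<ge> 2 \<and> a2 \<ge> 2 \<and> b1 \<ge> 2 * a1 - 1 \<and> b2 \<ge> 2 * a2 - 1 \<and>
              b1 + b2 \<le> \<gamma> + min a1 a2)"
proof
  assume "all_conditions (\<lambda>r. r powr a1 / a1) (\<lambda>r. r powr a2 / a2)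
            (\<lambda>(r1, r2). r1 powr b1 * r2 powr b2 / (1 + r1 + r2) powr \<gamma>)"
  then show "a1 \<ge> 2 \<and> a2 \<ge> 2 \<and> b1 \<ge> 2 * a1 - 1 \<and> b2 \<ge> 2 * a2 - 1 \<and> b1 + b2 \<le> \<gamma> + min a1 a2"
    by (rule necessity[OF assms])
next
  assume c: "a1 \<ge> 2 \<and> a2 \<ge> 2 \<and> b1 \<ge> 2 * a1 - 1 \<and> b2 \<ge> 2 * a2 - 1 \<and> b1 + b2 \<le> \<gamma> + min a1 a2"
  show "all_conditions (\<lambda>r. r powr a1 / a1) (\<lambda>r. r powr a2 / a2)
            (\<lambda>(r1, r2). r1 powr b1 * r2 powr b2 / (1 + r1 + r2) powr \<gamma>)"
    using c assms(5) by (intro sufficiency) auto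
qed

end
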